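(* Let $L=\mathbb Z^4\subset\mathbb R^4$ with the bilinear form $B(x,y)=xGy^T$, where $G=\begin{pmatrix}2&-1&0&0\\-1&2&-1&-1\\0&-1&2&0\\0&-1&0&2\end{pmatrix}$ (the $D_4$ lattice), and $Q(x)=\frac12B(x,x)$. For $\alpha\in L^\sharp$ and $\beta\in\frac12\mathbb Z^4$ put $\theta_{\alpha,\beta}(\tau,z)=\sum_{v\in\mathbb Z^4}e(B(\beta,v))\,e(\tau Q(\alpha+v)+B(\alpha+v,z))$ on $\mathbb H\times\mathbb C^4$. Let $A=\{(0,0,0,0),(0,0,\frac12,\frac12),(\frac12,0,0,\frac12),(\frac12,0,\frac12,0)\}$ and $\mathcal B=\{(0,0,0,0),(\frac12,\frac12,\frac12,\frac12),(\frac12,0,0,0),(0,\frac12,0,0)\}$. Then the seven functions $\theta_{\alpha,0}^2$ ($\alpha\in A$) and $\theta_{0,\beta}^2$ ($\beta\in\mathcal B$) are $\mathbb C$-linearly independent. Moreover, for any $\alpha\in L^\sharp$ and $\beta\in\frac12\mathbb Z^4$, $$\theta_{\alpha,\beta}^2+\theta_{0,0}^2=\theta_{\alpha,0}^2+\theta_{0,\beta}^2.$$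
   Context: $e(x)=\exp(2\pi ix)$, $\mathbb H$ the upper half plane; $B$ extended bilinearly to $\mathbb C^4$; $L^\sharp=\{v\in\mathbb R^4:B(v,L)\subseteq\mathbb Z\}$ (here $A$ is a set of representatives of $L^\sharp/L$). *)

theory Defs
  imports "HOL-Analysis.Analysis"
begin

definition vec4 :: "'a \<Rightarrow> 'a \<Rightarrow> 'a \<Rightarrow> 'a \<Rightarrow> 'a ^ 4" where
  "vec4 a b c d = (\<chi> i. if i = 0 then a else if i = 1 then b else if i = 2 then c else d)"

definition e :: "complex \<Rightarrow> complex" where
  "e x = exp (2 * complex_of_real pi * \<i> * x)"

definition Gm :: "complex ^ 4 ^ 4" where
  "Gm = vec4 (vec4 2 (-1) 0 0) (vec4 (-1) 2 (-1) (-1)) (vec4 0 (-1) 2 0) (vec4 0 (-1) 0 2)"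

definition Bf :: "complex ^ 4 \<Rightarrow> complex ^ 4 \<Rightarrow> complex" where
  "Bf x y = (\<Sum>i\<in>UNIV. \<Sum>j\<in>UNIV. x $ i * Gm $ i $ j * y $ j)"

definition cvec :: "real ^ 4 \<Rightarrow> complex ^ 4" where
  "cvec x = (\<chi> i. complex_of_real (x $ i))"

definition Qf :: "complex ^ 4 \<Rightarrow> complex" where
  "Qf x = Bf x x / 2"

definition Lat :: "(real ^ 4) set" where
  "Lat = {v. \<forall>i. v $ i \<in> \<int>}"

definition Lsharp :: "(real ^ 4) set" where
  "Lsharp = {v. \<forall>l\<in>Lat. Bf (cvec v) (cvec l) \<in> \<int>}"

definition halfLat :: "(real ^ 4) set" where
  "halfLat = {v. \<forall>i. 2 * v $ i \<in> \<int>}"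

definition theta :: "real ^ 4 \<Rightarrow> real ^ 4 \<Rightarrow> complex \<Rightarrow> complex ^ 4 \<Rightarrow> complex" where
  "theta \<alpha> \<beta> \<tau> z = (\<Sum>\<^sub>\<infinity>v\<in>Lat.
      e (Bf (cvec \<beta>) (cvec v)) * e (\<tau> * Qf (cvec (\<alpha> + v)) + Bf (cvec (\<alpha> + v)) z))"

definition Aset :: "(real ^ 4) set" where
  "Aset = {vec4 0 0 0 0, vec4 0 0 (1/2) (1/2), vec4 (1/2) 0 0 (1/2), vec4 (1/2) 0 (1/2) 0}"

definition Bset :: "(real ^ 4) set" where
  "Bset = {vec4 0 0 0 0, vec4 (1/2) (1/2) (1/2) (1/2), vec4 (1/2) 0 0 0, vec4 0 (1/2) 0 0}"

end

theory Submission
  imports Defs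
begin


lemma UNIV4: "(UNIV::4 set) = {0,1,2,3}"
proof -
  have "(x::4) = 0 \<or> x = 1 \<or> x = 2 \<or> x = 3" for x
    using exhaust_4[of x] by auto
  then show ?thesis by auto
qed

lemma sum4: "sum f (UNIV::4 set) = f 0 + f 1 + f 2 + f 3"
  unfolding UNIV4 by (simp add: ac_simps)

lemma vec4_nth[simp]: "vec4 a b c d $ 0 = a" "vec4 a b c d $ 1 = b" "vec4 a b c d $ 2 = c" "vec4 a b c d $ 3 = d"
  by (simp_all add: vec4_def)

lemma all4: "(\<forall>i::4. P i) \<longleftrightarrow> P 0 \<and> P 1 \<and> P 2 \<and> P 3"
proof -
  have "(\<forall>i::4. P i) \<longleftrightarrow> (\<forall>i\<in>UNIV. P i)" by simp
  also have "\<dots> \<longleftrightarrow> P 0 \<and> P 1 \<and> P 2 \<and> P 3" unfolding UNIV4 by simp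
  finally show ?thesis .
qed

lemma vec_eq4: "(x::'a^4) = y \<longleftrightarrow> x$0 = y$0 \<and> x$1 = y$1 \<and> x$2 = y$2 \<and> x$3 = y$3"
  by (auto simp: vec_eq_iff all4)


definition BR :: "real^4 \<Rightarrow> real^4 \<Rightarrow> real" where
  "BR x y = x$0*(2*y$0 - y$1) + x$1*(-y$0 + 2*y$1 - y$2 - y$3) + x$2*(-y$1 + 2*y$2) + x$3*(-y$1 + 2*y$3)"

definition QR :: "real^4 \<Rightarrow> real" where "QR x = BR x x / 2"

lemma Gm_nth: "Gm $ 0 $ 0 = 2" "Gm $ 0 $ 1 = -1" "Gm $ 0 $ 2 = 0" "Gm $ 0 $ 3 = 0"
  "Gm $ 1 $ 0 = -1" "Gm $ 1 $ 1 = 2" "Gm $ 1 $ 2 = -1" "Gm $ 1 $ 3 = -1"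
  "Gm $ 2 $ 0 = 0" "Gm $ 2 $ 1 = -1" "Gm $ 2 $ 2 = 2" "Gm $ 2 $ 3 = 0"
  "Gm $ 3 $ 0 = 0" "Gm $ 3 $ 1 = -1" "Gm $ 3 $ 2 = 0" "Gm $ 3 $ 3 = 2"
  by (simp_all add: Gm_def)

lemma Bf_expand: "Bf x y = x$0*(2*y$0 - y$1) + x$1*(-y$0 + 2*y$1 - y$2 - y$3) + x$2*(-y$1 + 2*y$2) + x$3*(-y$1 + 2*y$3)"
  unfolding Bf_def sum4 Gm_nth by (simp add: algebra_simps)

lemma cvec_nth[simp]: "cvec x $ i = complex_of_real (x $ i)"
  by (simp add: cvec_def)

lemma Bf_cvec: "Bf (cvec x) (cvec y) = complex_of_real (BR x y)"
  unfolding Bf_expand BR_def by simp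

lemma Qf_cvec: "Qf (cvec x) = complex_of_real (QR x)"
  unfolding Qf_def QR_def Bf_cvec by simp

lemma BR_sym: "BR x y = BR y x"
  unfolding BR_def by (simp add: algebra_simps)

lemma BR_add1: "BR (x + y) w = BR x w + BR y w" unfolding BR_def by (simp add: algebra_simps)
lemma BR_add2: "BR w (x + y) = BR w x + BR w y" unfolding BR_def by (simp add: algebra_simps)
lemma BR_diff1: "BR (x - y) w = BR x w - BR y w" unfolding BR_def by (simp add: algebra_simps)
lemma BR_diff2: "BR w (x - y) = BR w x - BR w y" unfolding BR_def by (simp add: algebra_simps)
lemma BR_scale1: "BR (c *\<^sub>R x) w = c * BR x w" unfolding BR_def by (simp add: algebra_simps)
lemma BR_scale2: "BR w (c *\<^sub>R x) = c * BR w x" unfolding BR_def by (simp add: algebra_simps)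
lemma BR_neg1: "BR (- x) w = - BR x w" unfolding BR_def by (simp add: algebra_simps)
lemma BR_neg2: "BR w (- x) = - BR w x" unfolding BR_def by (simp add: algebra_simps)
lemma BR_zero[simp]: "BR 0 w = 0" "BR w 0 = 0" unfolding BR_def by simp_all

lemma Bf_add1: "Bf (x + y) w = Bf x w + Bf y w" unfolding Bf_expand by (simp add: algebra_simps)
lemma Bf_add2: "Bf w (x + y) = Bf w x + Bf w y" unfolding Bf_expand by (simp add: algebra_simps)
lemma Bf_sym: "Bf x y = Bf y x" unfolding Bf_expand by (simp add: algebra_simps)
lemma Bf_zero[simp]: "Bf 0 w = 0" "Bf w 0 = 0" unfolding Bf_expand by simp_all
lemma cvec_add: "cvec (x + y) = cvec x + cvec y" by (simp add: vec_eq_iff)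
lemma cvec_diff: "cvec (x - y) = cvec x - cvec y" by (simp add: vec_eq_iff)
lemma cvec_zero[simp]: "cvec 0 = 0" by (simp add: vec_eq_iff)

lemma QR_add: "QR (x + y) = QR x + QR y + BR x y"
  unfolding QR_def BR_add1 BR_add2 using BR_sym[of y x] by (simp add: field_simps)

lemma QR_parallelogram: "QR x + QR y = (QR (x + y) + QR (x - y)) / 2"
  unfolding QR_def BR_add1 BR_add2 BR_diff1 BR_diff2 using BR_sym[of y x] by (simp add: field_simps)

lemma QR_lower: "QR x \<ge> (x$0^2 + x$1^2 + x$2^2 + x$3^2) / 10"
proof -
  define a where "a = x$0"
  define b where "b = x$1"
  define c where "c = x$2"
  define d where "d = x$3"
  have "QR x = a^2 + b^2 + c^2 + d^2 - a*b - b*c - b*d"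
    unfolding QR_def BR_def a_def b_def c_def d_def by (simp add: field_simps power2_eq_square)
  moreover have "a^2 + b^2 + c^2 + d^2 - a*b - b*c - b*d - (a^2 + b^2 + c^2 + d^2)/10
     = 3/10 * ((a-c)^2 + (a-d)^2 + (c-d)^2) + 9/10 * (b - (a+c+d)/(18/10))^2 + (3/10 - 10/36) * (a+c+d)^2"
    by (simp add: field_simps power2_eq_square)
  moreover have "3/10 * ((a-c)^2 + (a-d)^2 + (c-d)^2) + 9/10 * (b - (a+c+d)/(18/10))^2 + (3/10 - 10/36) * (a+c+d)^2 \<ge> 0"
    by (intro add_nonneg_nonneg mult_nonneg_nonneg) auto
  ultimately show ?thesis unfolding a_def b_def c_def d_def by linarith
qed

lemma e_add: "e (x + y) = e x * e y"
  unfolding e_def by (simp add: algebra_simps exp_add[symmetric])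

lemma e_zero[simp]: "e 0 = 1" unfolding e_def by simp

lemma e_int: "x \<in> \<int> \<Longrightarrow> e x = 1"
  unfolding e_def by (elim Ints_cases) (simp add: mult.commute mult.left_commute)

lemma e_neg: "e (- x) = inverse (e x)"
  unfolding e_def by (simp add: exp_minus[symmetric])

lemma e_nonzero[simp]: "e x \<noteq> 0" unfolding e_def by simp

lemma norm_e: "norm (e x) = exp (- 2 * pi * Im x)"
  unfolding e_def by simp

lemma e_real_mult_i: "e (\<i> * complex_of_real r) = complex_of_real (exp (- 2 * pi * r))"
  unfolding e_def by (simp add: exp_of_real[symmetric] algebra_simps)

lemma e_half_int: assumes "x \<in> \<int>" shows "e (x / 2) = 1 \<or> e (x / 2) = -1"
proof -
  have "e (x/2) * e (x/2) = 1" using e_int[OF assms] e_add[of "x/2" "x/2", symmetric] by simp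
  then have "(e (x/2) - 1) * (e (x/2) + 1) = 0" by (simp add: algebra_simps)
  then have "e (x/2) - 1 = 0 \<or> e (x/2) + 1 = 0" by simp
  then show ?thesis by (metis add_eq_0_iff2 eq_iff_diff_eq_0)
qed


lemma exp_abs_summable_Z: "(\<lambda>n::real. exp (- \<bar>n\<bar>)) summable_on \<int>"
proof -
  have geo: "(\<lambda>n::nat. exp (- real n)) summable_on UNIV"
  proof (rule summable_nonneg_imp_summable_on)
    have "summable (\<lambda>n::nat. exp (-1::real) ^ n)"
      by (rule summable_geometric) simp
    moreover have "exp (- real n) = exp (-1::real) ^ n" for n
      using exp_of_nat_mult[of n "-1::real"] by simp
    ultimately show "summable (\<lambda>n::nat. exp (- real n))" by simp
  qed simp
  have s1: "(\<lambda>n::real. exp (- \<bar>n\<bar>)) summable_on (of_nat ` UNIV)"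
    by (subst summable_on_reindex) (use geo in \<open>auto simp: inj_on_def o_def\<close>)
  have s2: "(\<lambda>n::real. exp (- \<bar>n\<bar>)) summable_on ((\<lambda>n. - of_nat n) ` UNIV)"
    by (subst summable_on_reindex) (use geo in \<open>auto simp: inj_on_def o_def\<close>)
  have "\<int> = (of_nat ` UNIV :: real set) \<union> ((\<lambda>n. - of_nat n) ` UNIV)"
  proof (intro equalityI subsetI)
    fix x :: real assume "x \<in> \<int>"
    then obtain z where z: "x = of_int z" by (auto elim: Ints_cases)
    show "x \<in> (of_nat ` UNIV :: real set) \<union> ((\<lambda>n. - of_nat n) ` UNIV)"
    proof (cases "z \<ge> 0")
      case True
      then have "x = of_nat (nat z)" using z by simp
      then show ?thesis by blast
    next
      case False
      then have "x = - of_nat (nat (-z))" using z by simp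
      then show ?thesis by blast
    qed
  qed auto
  then show ?thesis using summable_on_union[OF s1 s2] by simp
qed

lemma PiE_prod_summable:
  fixes f :: "'a \<Rightarrow> 'b \<Rightarrow> real"
  assumes fin: "finite A" and sm: "\<And>x. x\<in>A \<Longrightarrow> f x summable_on B x"
    and nn: "\<And>x y. x\<in>A \<Longrightarrow> y \<in> B x \<Longrightarrow> f x y \<ge> 0"
  shows "(\<lambda>g. \<Prod>x\<in>A. f x (g x)) summable_on PiE A B"
proof (rule nonneg_bdd_above_summable_on)
  show "0 \<le> (\<Prod>x\<in>A. f x (g x))" if "g \<in> PiE A B" for g
    using that nn by (auto intro!: prod_nonneg)
  show "bdd_above (sum (\<lambda>g. \<Prod>x\<in>A. f x (g x)) ` {F. F \<subseteq> PiE A B \<and> finite F})"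
  proof (rule bdd_aboveI2)
    fix F assume F: "F \<in> {F. F \<subseteq> PiE A B \<and> finite F}"
    define C where "C x = (\<lambda>g. g x) ` F" for x
    have finC: "finite (C x)" for x using F by (auto simp: C_def)
    have CB: "C x \<subseteq> B x" if "x \<in> A" for x using F that by (auto simp: C_def PiE_def Pi_def)
    have FC: "F \<subseteq> PiE A C"
      using F by (auto simp: C_def PiE_def Pi_def)
    have finP: "finite (PiE A C)" by (rule finite_PiE) (auto simp: fin finC)
    have "(\<Sum>g\<in>F. \<Prod>x\<in>A. f x (g x)) \<le> (\<Sum>g\<in>PiE A C. \<Prod>x\<in>A. f x (g x))"
    proof (rule sum_mono2[OF finP FC])
      fix g assume "g \<in> PiE A C - F"
      then have "\<forall>x\<in>A. g x \<in> B x" using CB by (auto simp: PiE_iff)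
      then show "0 \<le> (\<Prod>x\<in>A. f x (g x))" using nn by (auto intro!: prod_nonneg)
    qed
    also have "\<dots> = (\<Prod>x\<in>A. \<Sum>y\<in>C x. f x y)"
      by (rule prod_sum_PiE[symmetric]) (auto simp: fin finC)
    also have "\<dots> \<le> (\<Prod>x\<in>A. infsum (f x) (B x))"
      using CB nn sm by (intro prod_mono conjI sum_nonneg finite_sum_le_infsum) (auto simp: finC)
    finally show "(\<Sum>g\<in>F. \<Prod>x\<in>A. f x (g x)) \<le> (\<Prod>x\<in>A. infsum (f x) (B x))" .
  qed
qed

lemma Lat_PiE: "Lat = vec_lambda ` PiE UNIV (\<lambda>_. \<int>)"
proof -
  have "v \<in> vec_lambda ` PiE UNIV (\<lambda>_. \<int>)" if "v \<in> Lat" for v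
    using that by (intro image_eqI[of _ _ "vec_nth v"]) (auto simp: Lat_def)
  then show ?thesis by (auto simp: Lat_def)
qed

lemma inj_vec_lambda: "inj_on (vec_lambda :: (4 \<Rightarrow> real) \<Rightarrow> real^4) X"
  by (auto simp: inj_on_def vec_lambda_inject)

lemma exp_prod_summable_Lat: "(\<lambda>v. \<Prod>i\<in>UNIV. exp (- \<bar>v$i\<bar>)) summable_on Lat"
proof -
  have "(\<lambda>g::4\<Rightarrow>real. \<Prod>x\<in>(UNIV::4 set). (\<lambda>_ y. exp (- \<bar>y\<bar>)) x (g x)) summable_on PiE UNIV (\<lambda>_. \<int>)"
    by (rule PiE_prod_summable) (auto intro: exp_abs_summable_Z)
  then have "(\<lambda>g::4\<Rightarrow>real. \<Prod>x\<in>(UNIV::4 set). exp (- \<bar>g x\<bar>)) summable_on PiE UNIV (\<lambda>_. \<int>)"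
    by simp
  then show ?thesis unfolding Lat_PiE
    by (subst summable_on_reindex) (auto simp: inj_vec_lambda o_def)
qed

lemma quad_lower: fixes a b s :: real assumes "a > 0" shows "a * s^2 - b * \<bar>s\<bar> \<ge> - (b^2 / (4*a))"
proof -
  define u where "u = \<bar>s\<bar>"
  have u2: "s^2 = u^2" unfolding u_def by simp
  have "0 \<le> a * (u - b/(2*a))^2" using assms by simp
  also have "a * (u - b/(2*a))^2 = a * u^2 - b * u + b^2/(4*a)"
    using assms by (simp add: power2_eq_square field_simps)
  finally show ?thesis unfolding u2 u_def[symmetric] by simp
qed

definition Cw :: "real^4 \<Rightarrow> real" where
  "Cw w = \<bar>2*w$0 - w$1\<bar> + \<bar>-w$0 + 2*w$1 - w$2 - w$3\<bar> + \<bar>-w$1 + 2*w$2\<bar> + \<bar>-w$1 + 2*w$3\<bar>"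

lemma BR_lower: "BR x w \<ge> - Cw w * (\<bar>x$0\<bar> + \<bar>x$1\<bar> + \<bar>x$2\<bar> + \<bar>x$3\<bar>)"
proof -
  define g0 where "g0 = 2*w$0 - w$1"
  define g1 where "g1 = -w$0 + 2*w$1 - w$2 - w$3"
  define g2 where "g2 = -w$1 + 2*w$2"
  define g3 where "g3 = -w$1 + 2*w$3"
  have B: "BR x w = x$0*g0 + x$1*g1 + x$2*g2 + x$3*g3"
    unfolding BR_def g0_def g1_def g2_def g3_def by simp
  have C: "Cw w = \<bar>g0\<bar> + \<bar>g1\<bar> + \<bar>g2\<bar> + \<bar>g3\<bar>"
    unfolding Cw_def g0_def g1_def g2_def g3_def by simp
  have l: "x * g \<ge> - (\<bar>x\<bar> * Cw w)" if "\<bar>g\<bar> \<le> Cw w" for x g :: real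
  proof -
    have "\<bar>x * g\<bar> \<le> \<bar>x\<bar> * Cw w" using that by (simp add: abs_mult mult_left_mono)
    then show ?thesis by linarith
  qed
  have "x$0*g0 \<ge> - (\<bar>x$0\<bar> * Cw w)" "x$1*g1 \<ge> - (\<bar>x$1\<bar> * Cw w)"
       "x$2*g2 \<ge> - (\<bar>x$2\<bar> * Cw w)" "x$3*g3 \<ge> - (\<bar>x$3\<bar> * Cw w)"
    by (rule l; use abs_ge_zero[of g0] abs_ge_zero[of g1] abs_ge_zero[of g2] abs_ge_zero[of g3] in \<open>unfold C, linarith\<close>)+
  moreover have "Cw w * (\<bar>x$0\<bar> + \<bar>x$1\<bar> + \<bar>x$2\<bar> + \<bar>x$3\<bar>) = 
     \<bar>x$0\<bar> * Cw w + \<bar>x$1\<bar> * Cw w + \<bar>x$2\<bar> * Cw w + \<bar>x$3\<bar> * Cw w"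
    by (simp add: algebra_simps)
  ultimately show ?thesis unfolding B by linarith
qed

lemma expo_lower:
  assumes t: "t > 0"
  shows "2*pi*(t * QR x + BR x w) \<ge> (\<bar>x$0\<bar> + \<bar>x$1\<bar> + \<bar>x$2\<bar> + \<bar>x$3\<bar>) - 4 * (2*pi*Cw w + 1)^2 / (4*(pi*t/5))"
proof -
  define a where "a = pi*t/5"
  define b where "b = 2*pi*Cw w + 1"
  have a: "a > 0" using t by (simp add: a_def)
  have q: "a * s^2 - b * \<bar>s\<bar> \<ge> - (b^2 / (4*a))" for s using quad_lower[OF a] .
  have "(\<bar>x$0\<bar> + \<bar>x$1\<bar> + \<bar>x$2\<bar> + \<bar>x$3\<bar>) - 4 * (b^2 / (4*a)) \<le>
      (a * x$0^2 - b * \<bar>x$0\<bar>) + (a * x$1^2 - b * \<bar>x$1\<bar>) + (a * x$2^2 - b * \<bar>x$2\<bar>) + (a * x$3^2 - b * \<bar>x$3\<bar>)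
      + (\<bar>x$0\<bar> + \<bar>x$1\<bar> + \<bar>x$2\<bar> + \<bar>x$3\<bar>)"
    using q[of "x$0"] q[of "x$1"] q[of "x$2"] q[of "x$3"] by linarith
  also have "\<dots> = 2*pi*(t * ((x$0^2 + x$1^2 + x$2^2 + x$3^2) / 10) - Cw w * (\<bar>x$0\<bar> + \<bar>x$1\<bar> + \<bar>x$2\<bar> + \<bar>x$3\<bar>))"
    by (simp add: a_def b_def algebra_simps)
  also have "\<dots> \<le> 2*pi*(t * QR x + BR x w)"
  proof -
    have "t * ((x$0^2 + x$1^2 + x$2^2 + x$3^2) / 10) \<le> t * QR x"
      using QR_lower[of x] t by (intro mult_left_mono) auto
    then show ?thesis using BR_lower[where x=x and w=w] by simp
  qed
  finally show ?thesis by (simp add: a_def b_def)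
qed

lemma gauss_summable:
  assumes t: "t > 0"
  shows "(\<lambda>v. exp (- 2*pi*(t * QR (p+v) + BR (p+v) w))) summable_on Lat"
proof -
  define M where "M = 4 * (2*pi*Cw w + 1)^2 / (4*(pi*t/5)) + (\<bar>p$0\<bar> + \<bar>p$1\<bar> + \<bar>p$2\<bar> + \<bar>p$3\<bar>)"
  have bound: "exp (- 2*pi*(t * QR (p+v) + BR (p+v) w)) \<le> exp M * (\<Prod>i\<in>UNIV. exp (- \<bar>v$i\<bar>))" for v
  proof -
    have "\<bar>v$i\<bar> \<le> \<bar>(p+v)$i\<bar> + \<bar>p$i\<bar>" for i by simp
    then have "- 2*pi*(t * QR (p+v) + BR (p+v) w) \<le> M - (\<bar>v$0\<bar> + \<bar>v$1\<bar> + \<bar>v$2\<bar> + \<bar>v$3\<bar>)"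
      using expo_lower[OF t, of "p+v" w] unfolding M_def
      using \<open>\<And>i. \<bar>v$i\<bar> \<le> \<bar>(p+v)$i\<bar> + \<bar>p$i\<bar>\<close>[of 0] \<open>\<And>i. \<bar>v$i\<bar> \<le> \<bar>(p+v)$i\<bar> + \<bar>p$i\<bar>\<close>[of 1]
        \<open>\<And>i. \<bar>v$i\<bar> \<le> \<bar>(p+v)$i\<bar> + \<bar>p$i\<bar>\<close>[of 2] \<open>\<And>i. \<bar>v$i\<bar> \<le> \<bar>(p+v)$i\<bar> + \<bar>p$i\<bar>\<close>[of 3]
      by linarith
    then have "exp (- 2*pi*(t * QR (p+v) + BR (p+v) w)) \<le> exp (M - (\<bar>v$0\<bar> + \<bar>v$1\<bar> + \<bar>v$2\<bar> + \<bar>v$3\<bar>))"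
      by simp
    also have "\<dots> = exp M * (\<Prod>i\<in>UNIV. exp (- \<bar>v$i\<bar>))"
      unfolding UNIV4 by (simp add: exp_diff exp_add exp_minus field_simps)
    finally show ?thesis .
  qed
  show ?thesis
    by (rule summable_on_comparison_test[OF summable_on_cmult_right[OF exp_prod_summable_Lat]])
       (use bound in auto)
qed


definition zim :: "complex^4 \<Rightarrow> real^4" where "zim z = (\<chi> i. Im (z$i))"
definition ft :: "complex \<Rightarrow> complex^4 \<Rightarrow> real^4 \<Rightarrow> complex" where
  "ft \<tau> z x = e (\<tau> * complex_of_real (QR x) + Bf (cvec x) z)"
definition chi :: "real^4 \<Rightarrow> real^4 \<Rightarrow> complex" where
  "chi \<beta> v = e (complex_of_real (BR \<beta> v))"

lemma theta_alt: "theta \<alpha> \<beta> \<tau> z = (\<Sum>\<^sub>\<infinity>v\<in>Lat. chi \<beta> v * ft \<tau> z (\<alpha> + v))"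
  unfolding theta_def chi_def ft_def Bf_cvec Qf_cvec ..

lemma Im_Bf: "Im (Bf (cvec x) z) = BR x (zim z)"
  unfolding Bf_expand BR_def zim_def by simp

lemma norm_ft: "norm (ft \<tau> z x) = exp (- 2*pi*(Im \<tau> * QR x + BR x (zim z)))"
  unfolding ft_def norm_e by (simp add: Im_Bf)

lemma norm_chi[simp]: "norm (chi \<beta> v) = 1"
  unfolding chi_def norm_e by simp

lemma ft_abs_summable: "Im \<tau> > 0 \<Longrightarrow> (\<lambda>v. norm (ft \<tau> z (p + v))) summable_on Lat"
  unfolding norm_ft by (rule gauss_summable)

lemma tm_abs_summable: "Im \<tau> > 0 \<Longrightarrow> (\<lambda>v. norm (c v * ft \<tau> z (p + v))) summable_on Lat"
  if "\<And>v. norm (c v) = 1"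
  unfolding norm_mult that by (simp add: ft_abs_summable)

lemma tm_summable: "Im \<tau> > 0 \<Longrightarrow> (\<lambda>v. c v * ft \<tau> z (p + v)) summable_on Lat"
  if "\<And>v. norm (c v) = 1"
  by (rule abs_summable_summable) (use tm_abs_summable[OF that] in auto)

lemma Lat_iff: "x \<in> Lat \<longleftrightarrow> x$0 \<in> \<int> \<and> x$1 \<in> \<int> \<and> x$2 \<in> \<int> \<and> x$3 \<in> \<int>"
  unfolding Lat_def using all4[of "\<lambda>i. x$i \<in> \<int>"] by simp

lemma Lat_add: "x \<in> Lat \<Longrightarrow> y \<in> Lat \<Longrightarrow> x + y \<in> Lat" by (auto simp: Lat_def)
lemma Lat_diff: "x \<in> Lat \<Longrightarrow> y \<in> Lat \<Longrightarrow> x - y \<in> Lat" by (auto simp: Lat_def)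
lemma Lat_neg: "x \<in> Lat \<Longrightarrow> - x \<in> Lat" by (auto simp: Lat_def)
lemma Lat_zero[simp]: "0 \<in> Lat" by (auto simp: Lat_def)
lemma Lat_double: "x \<in> Lat \<Longrightarrow> 2 *\<^sub>R x \<in> Lat" by (auto simp: Lat_def)

lemma BR_Lat_Int: "x \<in> Lat \<Longrightarrow> y \<in> Lat \<Longrightarrow> BR x y \<in> \<int>"
  unfolding Lat_iff BR_def by (intro Ints_add Ints_mult Ints_diff Ints_minus) auto

lemma halfLat_double: "\<beta> \<in> halfLat \<Longrightarrow> 2 *\<^sub>R \<beta> \<in> Lat"
  by (auto simp: halfLat_def Lat_def)

lemma chi_add: "chi \<beta> (v + w) = chi \<beta> v * chi \<beta> w"
  unfolding chi_def BR_add2 by (simp add: e_add)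

lemma chi_zero1[simp]: "chi 0 v = 1" unfolding chi_def by simp
lemma chi_zero2[simp]: "chi \<beta> 0 = 1" unfolding chi_def by simp

lemma chi_pm: assumes "\<beta> \<in> halfLat" "v \<in> Lat" shows "chi \<beta> v = 1 \<or> chi \<beta> v = -1"
proof -
  have "BR (2 *\<^sub>R \<beta>) v \<in> \<int>" by (rule BR_Lat_Int[OF halfLat_double[OF assms(1)] assms(2)])
  then have "complex_of_real (BR (2 *\<^sub>R \<beta>) v) \<in> \<int>" by (metis Ints_cases Ints_of_int of_real_of_int_eq)
  moreover have "complex_of_real (BR \<beta> v) = complex_of_real (BR (2 *\<^sub>R \<beta>) v) / 2"
    by (simp add: BR_scale1)
  ultimately show ?thesis unfolding chi_def using e_half_int by metis
qed

lemma chi_sq: assumes "\<beta> \<in> halfLat" "v \<in> Lat" shows "chi \<beta> v * chi \<beta> v = 1"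
  using chi_pm[OF assms] by auto

lemma chi_Lsharp: assumes "h \<in> Lsharp" "v \<in> Lat" shows "chi h v = 1"
proof -
  have "Bf (cvec h) (cvec v) \<in> \<int>" using assms by (auto simp: Lsharp_def)
  then show ?thesis unfolding chi_def Bf_cvec[symmetric] by (rule e_int)
qed

lemma chi_double: assumes "\<beta> \<in> halfLat" "v \<in> Lat" shows "chi \<beta> (2 *\<^sub>R v) = 1"
proof -
  have "2 *\<^sub>R v = v + v" by (simp add: scaleR_2)
  then show ?thesis using chi_add chi_sq[OF assms] by metis
qed

lemma infsum_square:
  fixes u :: "'a \<Rightarrow> complex"
  assumes "(\<lambda>v. norm (u v)) summable_on A"
  shows "(\<lambda>(v,w). u v * u w) summable_on (A \<times> A)"
    and "(infsum u A)^2 = infsum (\<lambda>(v,w). u v * u w) (A \<times> A)"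
proof -
  have us: "u summable_on A" using assms abs_summable_summable by blast
  have abs: "(\<lambda>x. norm ((\<lambda>(v,w). u v * u w) x)) summable_on (A \<times> A)"
  proof (subst Infinite_Sum.abs_summable_on_Sigma_iff, intro conjI ballI)
    show "(\<lambda>y. norm ((\<lambda>(v,w). u v * u w) (x, y))) summable_on A" for x
      using summable_on_cmult_right[OF assms, of "norm (u x)"] by (simp add: norm_mult)
    have eq: "(\<lambda>x. norm (infsum (\<lambda>y. norm ((\<lambda>(v,w). u v * u w) (x, y))) A)) = (\<lambda>x. norm (norm (u x) * infsum (\<lambda>y. norm (u y)) A))"
      by (simp add: norm_mult infsum_cmult_right')
    have "(\<lambda>x. norm (norm (u x) * infsum (\<lambda>y. norm (u y)) A)) summable_on A"
      using summable_on_cmult_left[OF assms, of "infsum (\<lambda>y. norm (u y)) A"]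
      by (simp add: abs_mult infsum_nonneg)
    then show "(\<lambda>x. norm (infsum (\<lambda>y. norm ((\<lambda>(v,w). u v * u w) (x, y))) A)) summable_on A"
      unfolding eq .
  qed
  then show sm: "(\<lambda>(v,w). u v * u w) summable_on (A \<times> A)"
    using abs_summable_summable by blast
  have "infsum (\<lambda>(v,w). u v * u w) (A \<times> A) = infsum (\<lambda>x. infsum (\<lambda>y. (\<lambda>(v,w). u v * u w) (x,y)) A) A"
    using infsum_Sigma_banach[OF sm] by simp
  also have "\<dots> = infsum (\<lambda>x. u x * infsum u A) A"
    by (simp add: infsum_cmult_right')
  also have "\<dots> = infsum u A * infsum u A"
    by (simp add: infsum_cmult_left')
  finally show "(infsum u A)^2 = infsum (\<lambda>(v,w). u v * u w) (A \<times> A)"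
    by (simp add: power2_eq_square)
qed


definition PP :: "real^4 \<Rightarrow> ((real^4) \<times> (real^4)) set" where
  "PP \<beta> = {(v,w). v \<in> Lat \<and> w \<in> Lat \<and> chi \<beta> (v+w) = -1}"

definition gg :: "complex \<Rightarrow> complex^4 \<Rightarrow> real^4 \<Rightarrow> (real^4) \<times> (real^4) \<Rightarrow> complex" where
  "gg \<tau> z \<alpha> = (\<lambda>(v,w). ft \<tau> z (\<alpha>+v) * ft \<tau> z (\<alpha>+w))"

lemma ft_mult: "ft \<tau> z x * ft \<tau> z y = e (\<tau> * complex_of_real (QR x + QR y) + Bf (cvec (x+y)) z)"
  unfolding ft_def e_add[symmetric] cvec_add Bf_add1 by (simp add: algebra_simps)

lemma core_bij:
  fixes M N :: "real^4 \<Rightarrow> real^4"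
  assumes a2: "2 *\<^sub>R \<alpha> \<in> Lat" and hb: "\<beta> \<in> halfLat" and ca: "chi \<beta> (2 *\<^sub>R \<alpha>) = 1"
    and NM: "\<And>d. N (M d) = d" and MN: "\<And>d. M (N d) = d" and QM: "\<And>d. QR (M d) = QR d"
    and LM: "\<And>d. d \<in> Lat \<Longrightarrow> chi \<beta> d = -1 \<Longrightarrow> (1/2) *\<^sub>R (M d - d - 2 *\<^sub>R \<alpha>) \<in> Lat"
    and LN: "\<And>d. d \<in> Lat \<Longrightarrow> chi \<beta> d = -1 \<Longrightarrow> (1/2) *\<^sub>R (N d - d - 2 *\<^sub>R \<alpha>) \<in> Lat"
  shows "infsum (gg \<tau> z \<alpha>) (PP \<beta>) = infsum (gg \<tau> z 0) (PP \<beta>)"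
proof -
  define kM where "kM d = (1/2) *\<^sub>R (M d - d - 2 *\<^sub>R \<alpha>)" for d
  define kN where "kN d = (1/2) *\<^sub>R (N d - d - 2 *\<^sub>R \<alpha>)" for d
  define j where "j = (\<lambda>(v,w). (2 *\<^sub>R \<alpha> + v + kM (v - w), w - kM (v - w)))"
  define i where "i = (\<lambda>(v,w). (v + kN (v - w), w - 2 *\<^sub>R \<alpha> - kN (v - w)))"
  have kMN: "kN (M d) = - kM d - 2 *\<^sub>R \<alpha>" for d
    unfolding kM_def kN_def NM by (simp add: vec_eq_iff algebra_simps)
  have kNM: "kM (N d) = - kN d - 2 *\<^sub>R \<alpha>" for d
    unfolding kM_def kN_def MN by (simp add: vec_eq_iff algebra_simps)
  have jdiff: "(2 *\<^sub>R \<alpha> + v + kM (v - w)) - (w - kM (v - w)) = M (v - w)" for v w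
    unfolding kM_def by (simp add: vec_eq_iff algebra_simps)
  have idiff: "(v + kN (v - w)) - (w - 2 *\<^sub>R \<alpha> - kN (v - w)) = N (v - w)" for v w
    unfolding kN_def by (simp add: vec_eq_iff algebra_simps)
  have chi_sub: "chi \<beta> (v - w) = chi \<beta> (v + w)" if "v \<in> Lat" "w \<in> Lat" for v w
  proof -
    have "v + w = (v - w) + 2 *\<^sub>R w" by (simp add: vec_eq_iff)
    then have "chi \<beta> (v + w) = chi \<beta> (v - w) * chi \<beta> (2 *\<^sub>R w)" by (metis chi_add)
    then show ?thesis using chi_double[OF hb that(2)] by simp
  qed
  show ?thesis
  proof (rule infsum_reindex_bij_witness[of "PP \<beta>" i j])
    fix a assume a: "a \<in> PP \<beta>"
    obtain v w where vw: "a = (v,w)" by fastforce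
    have v: "v \<in> Lat" and w: "w \<in> Lat" and c: "chi \<beta> (v+w) = -1" using a vw by (auto simp: PP_def)
    have cd: "chi \<beta> (v - w) = -1" using chi_sub[OF v w] c by simp
    have kL: "kM (v - w) \<in> Lat" unfolding kM_def by (rule LM[OF Lat_diff[OF v w] cd])
    have e1: "(2 *\<^sub>R \<alpha> + v + kM (v - w)) + kN (M (v - w)) = v"
      unfolding kMN by (simp add: vec_eq_iff)
    have e2: "w - kM (v - w) - 2 *\<^sub>R \<alpha> - kN (M (v - w)) = w"
      unfolding kMN by (simp add: vec_eq_iff)
    show "i (j a) = a" unfolding vw j_def i_def using jdiff[of v w] e1 e2
      by simp
    have "(2 *\<^sub>R \<alpha> + v + kM (v - w)) + (w - kM (v - w)) = 2 *\<^sub>R \<alpha> + (v + w)"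
      by (simp add: vec_eq_iff)
    then have "chi \<beta> ((2 *\<^sub>R \<alpha> + v + kM (v - w)) + (w - kM (v - w))) = chi \<beta> (2 *\<^sub>R \<alpha>) * chi \<beta> (v + w)"
      by (simp add: chi_add[symmetric])
    then show "j a \<in> PP \<beta>" unfolding vw j_def PP_def using c ca kL v w a2
      by (auto intro!: Lat_add Lat_diff)
    show "gg \<tau> z 0 (j a) = gg \<tau> z \<alpha> a"
    proof -
      have s1: "(2 *\<^sub>R \<alpha> + v + kM (v - w)) + (w - kM (v - w)) = (\<alpha> + v) + (\<alpha> + w)"
        by (simp add: vec_eq_iff)
      have s2: "(\<alpha> + v) - (\<alpha> + w) = v - w" by simp
      have Qeq: "QR (2 *\<^sub>R \<alpha> + v + kM (v - w)) + QR (w - kM (v - w)) = QR (\<alpha> + v) + QR (\<alpha> + w)"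
        unfolding QR_parallelogram[of "2 *\<^sub>R \<alpha> + v + kM (v - w)" "w - kM (v - w)"]
          QR_parallelogram[of "\<alpha> + v" "\<alpha> + w"] jdiff[of v w] QM[of "v - w"] s1 s2 ..
      show ?thesis by (simp only: vw j_def gg_def prod.case ft_mult add_0_left Qeq s1)
    qed
  next
    fix b assume b: "b \<in> PP \<beta>"
    obtain v w where vw: "b = (v,w)" by fastforce
    have v: "v \<in> Lat" and w: "w \<in> Lat" and c: "chi \<beta> (v+w) = -1" using b vw by (auto simp: PP_def)
    have cd: "chi \<beta> (v - w) = -1" using chi_sub[OF v w] c by simp
    have kL: "kN (v - w) \<in> Lat" unfolding kN_def by (rule LN[OF Lat_diff[OF v w] cd])
    have e1: "2 *\<^sub>R \<alpha> + (v + kN (v - w)) + kM (N (v - w)) = v"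
      unfolding kNM by (simp add: vec_eq_iff)
    have e2: "w - 2 *\<^sub>R \<alpha> - kN (v - w) - kM (N (v - w)) = w"
      unfolding kNM by (simp add: vec_eq_iff)
    show "j (i b) = b" unfolding vw j_def i_def using idiff[of v w] e1 e2
      by simp
    have "((v + kN (v - w)) + (w - 2 *\<^sub>R \<alpha> - kN (v - w))) + 2 *\<^sub>R \<alpha> = v + w"
      by (simp add: vec_eq_iff)
    then have "chi \<beta> ((v + kN (v - w)) + (w - 2 *\<^sub>R \<alpha> - kN (v - w))) * chi \<beta> (2 *\<^sub>R \<alpha>) = chi \<beta> (v + w)"
      by (metis chi_add)
    then show "i b \<in> PP \<beta>" unfolding vw i_def PP_def using c ca kL v w a2
      by (auto intro!: Lat_add Lat_diff)
  qed
qed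


lemma infsum_diff':
  fixes f g :: "'a \<Rightarrow> complex"
  assumes "f summable_on A" "g summable_on A"
  shows "infsum (\<lambda>x. f x - g x) A = infsum f A - infsum g A"
proof -
  have "infsum (\<lambda>x. f x + (- g x)) A = infsum f A + infsum (\<lambda>x. - g x) A"
    by (rule infsum_add) (use assms in \<open>auto simp: summable_on_uminus\<close>)
  then show ?thesis by (simp add: infsum_uminus)
qed

lemma sq_expand:
  assumes t: "Im \<tau> > 0" and b: "\<beta> \<in> halfLat"
  shows "(\<lambda>(v,w). chi \<beta> (v+w) * gg \<tau> z \<alpha> (v,w)) summable_on (Lat \<times> Lat)"
    and "(theta \<alpha> \<beta> \<tau> z)^2 = infsum (\<lambda>(v,w). chi \<beta> (v+w) * gg \<tau> z \<alpha> (v,w)) (Lat \<times> Lat)"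
proof -
  define u where "u v = chi \<beta> v * ft \<tau> z (\<alpha> + v)" for v
  have n: "(\<lambda>v. norm (u v)) summable_on Lat" unfolding u_def
    by (rule tm_abs_summable[OF _ t]) simp
  have eq: "(\<lambda>(v,w). u v * u w) = (\<lambda>(v,w). chi \<beta> (v+w) * gg \<tau> z \<alpha> (v,w))"
    by (auto simp: u_def gg_def chi_add fun_eq_iff)
  show "(\<lambda>(v,w). chi \<beta> (v+w) * gg \<tau> z \<alpha> (v,w)) summable_on (Lat \<times> Lat)"
    using infsum_square(1)[OF n] unfolding eq .
  have "theta \<alpha> \<beta> \<tau> z = infsum u Lat" unfolding theta_alt u_def ..
  then show "(theta \<alpha> \<beta> \<tau> z)^2 = infsum (\<lambda>(v,w). chi \<beta> (v+w) * gg \<tau> z \<alpha> (v,w)) (Lat \<times> Lat)"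
    using infsum_square(2)[OF n] unfolding eq by simp
qed

lemma sq_diff:
  assumes t: "Im \<tau> > 0" and b: "\<beta> \<in> halfLat"
  shows "(theta \<alpha> \<beta> \<tau> z)^2 - (theta \<alpha> 0 \<tau> z)^2 = -2 * infsum (gg \<tau> z \<alpha>) (PP \<beta>)"
proof -
  have b0: "(0::real^4) \<in> halfLat" by (simp add: halfLat_def)
  have s0: "(\<lambda>(v,w). chi 0 (v+w) * gg \<tau> z \<alpha> (v,w)) summable_on (Lat \<times> Lat)"
    by (rule sq_expand(1)[OF t b0])
  have "(theta \<alpha> \<beta> \<tau> z)^2 - (theta \<alpha> 0 \<tau> z)^2 =
     infsum (\<lambda>p. (\<lambda>(v,w). chi \<beta> (v+w) * gg \<tau> z \<alpha> (v,w)) p - (\<lambda>(v,w). chi 0 (v+w) * gg \<tau> z \<alpha> (v,w)) p) (Lat \<times> Lat)"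
    unfolding sq_expand(2)[OF t b] sq_expand(2)[OF t b0]
    by (rule infsum_diff'[symmetric, OF sq_expand(1)[OF t b] s0])
  also have "\<dots> = infsum (\<lambda>p. -2 * gg \<tau> z \<alpha> p) (PP \<beta>)"
  proof (rule infsum_cong_neutral)
    fix p assume "p \<in> PP \<beta> - Lat \<times> Lat" then show "-2 * gg \<tau> z \<alpha> p = 0" by (auto simp: PP_def)
  next
    fix p assume p: "p \<in> Lat \<times> Lat - PP \<beta>"
    then obtain v w where vw: "p = (v,w)" "v \<in> Lat" "w \<in> Lat" "chi \<beta> (v+w) \<noteq> -1" by (auto simp: PP_def)
    then have "chi \<beta> (v+w) = 1" using chi_pm[OF b Lat_add[OF vw(2,3)]] by auto
    then show "(\<lambda>(v,w). chi \<beta> (v+w) * gg \<tau> z \<alpha> (v,w)) p - (\<lambda>(v,w). chi 0 (v+w) * gg \<tau> z \<alpha> (v,w)) p = 0"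
      using vw by simp
  next
    fix p assume p: "p \<in> Lat \<times> Lat \<inter> PP \<beta>"
    then obtain v w where vw: "p = (v,w)" "chi \<beta> (v+w) = -1" by (auto simp: PP_def)
    then show "(\<lambda>(v,w). chi \<beta> (v+w) * gg \<tau> z \<alpha> (v,w)) p - (\<lambda>(v,w). chi 0 (v+w) * gg \<tau> z \<alpha> (v,w)) p = -2 * gg \<tau> z \<alpha> p"
      by simp
  qed
  also have "\<dots> = -2 * infsum (gg \<tau> z \<alpha>) (PP \<beta>)" by (rule infsum_cmult_right')
  finally show ?thesis .
qed

lemma part2_core:
  fixes M N :: "real^4 \<Rightarrow> real^4"
  assumes t: "Im \<tau> > 0"
    and a2: "2 *\<^sub>R \<alpha> \<in> Lat" and hb: "\<beta> \<in> halfLat" and ca: "chi \<beta> (2 *\<^sub>R \<alpha>) = 1"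
    and NM: "\<And>d. N (M d) = d" and MN: "\<And>d. M (N d) = d" and QM: "\<And>d. QR (M d) = QR d"
    and LM: "\<And>d. d \<in> Lat \<Longrightarrow> chi \<beta> d = -1 \<Longrightarrow> (1/2) *\<^sub>R (M d - d - 2 *\<^sub>R \<alpha>) \<in> Lat"
    and LN: "\<And>d. d \<in> Lat \<Longrightarrow> chi \<beta> d = -1 \<Longrightarrow> (1/2) *\<^sub>R (N d - d - 2 *\<^sub>R \<alpha>) \<in> Lat"
  shows "(theta \<alpha> \<beta> \<tau> z)^2 + (theta 0 0 \<tau> z)^2 = (theta \<alpha> 0 \<tau> z)^2 + (theta 0 \<beta> \<tau> z)^2"
proof -
  have cb: "infsum (gg \<tau> z \<alpha>) (PP \<beta>) = infsum (gg \<tau> z 0) (PP \<beta>)"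
    by (rule core_bij[OF a2 hb ca NM MN QM LM LN])
  have "(theta \<alpha> \<beta> \<tau> z)^2 - (theta \<alpha> 0 \<tau> z)^2 = (theta 0 \<beta> \<tau> z)^2 - (theta 0 0 \<tau> z)^2"
    unfolding sq_diff[OF t hb] cb by simp
  then show ?thesis by (simp add: algebra_simps)
qed


definition "a1 = vec4 0 0 (1/2) (1/2 :: real)"
definition "a2 = vec4 (1/2) 0 0 (1/2 :: real)"
definition "a3 = vec4 (1/2) 0 (1/2) (0 :: real)"
definition "b1 = vec4 (1/2) (1/2) (1/2) (1/2 :: real)"
definition "b2 = vec4 (1/2) 0 0 (0 :: real)"
definition "b3 = vec4 0 (1/2) 0 (0 :: real)"

lemma vec4_zero: "vec4 0 0 0 0 = (0::real^4)" by (simp add: vec_eq4)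

lemma Aset_eq: "Aset = {0, a1, a2, a3}" unfolding Aset_def a1_def a2_def a3_def vec4_zero ..
lemma Bset_eq: "Bset = {0, b1, b2, b3}" unfolding Bset_def b1_def b2_def b3_def vec4_zero ..

lemma e_of_real_int: "x \<in> \<int> \<Longrightarrow> e (complex_of_real x) = 1"
  by (rule e_int) simp

lemma e_one[simp]: "e 1 = 1" by (rule e_int) simp
lemma e_numeral[simp]: "e (numeral n) = 1" by (rule e_int) simp
lemma e_neg_one[simp]: "e (-1) = 1" by (rule e_int) simp
lemma e_neg_numeral[simp]: "e (- numeral n) = 1" by (rule e_int) simp

lemma e_half_of_int: "e (complex_of_real (real_of_int n / 2)) = (if even n then 1 else -1)"
proof (cases "even n")
  case True
  then obtain k where "n = 2 * k" by (elim evenE)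
  then have "real_of_int n / 2 = real_of_int k" by simp
  then show ?thesis using True by (simp add: e_int[OF Ints_of_int])
next
  case False
  then obtain k where "n = 2 * k + 1" by (elim oddE)
  then have eq: "complex_of_real (real_of_int n / 2) = of_int k + 1/2" by simp
  have e12: "e (1/2) = -1" unfolding e_def by (simp add: mult.commute)
  show ?thesis unfolding eq e_add e12 e_int[OF Ints_of_int[of k]] using False by simp
qed

lemma Lat_obtain:
  assumes "d \<in> Lat"
  obtains x0 x1 x2 x3 where "d = vec4 (real_of_int x0) (real_of_int x1) (real_of_int x2) (real_of_int x3)"
proof -
  from assms have "d$0 \<in> \<int>" "d$1 \<in> \<int>" "d$2 \<in> \<int>" "d$3 \<in> \<int>" by (auto simp: Lat_iff)
  then obtain x0 x1 x2 x3 where "d$0 = of_int x0" "d$1 = of_int x1" "d$2 = of_int x2" "d$3 = of_int x3"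
    by (metis Ints_cases)
  then show ?thesis using that by (simp add: vec_eq4)
qed

lemma Lat_half_vec:
  assumes "even n0" "even n1" "even n2" "even n3"
    and "v = vec4 (real_of_int n0) (real_of_int n1) (real_of_int n2) (real_of_int n3)"
  shows "(1/2) *\<^sub>R v \<in> Lat"
proof -
  have h: "real_of_int n / 2 \<in> \<int>" if "even n" for n
    using that by (elim evenE) simp
  show ?thesis unfolding Lat_iff assms(5) using h[OF assms(1)] h[OF assms(2)] h[OF assms(3)] h[OF assms(4)]
    by simp
qed

lemma chi_b1: "chi b1 (vec4 (real_of_int x0) (real_of_int x1) (real_of_int x2) (real_of_int x3)) = (if even (x0 - x1 + x2 + x3) then 1 else -1)"
proof -
  have "BR b1 (vec4 (real_of_int x0) (real_of_int x1) (real_of_int x2) (real_of_int x3)) = real_of_int (x0 - x1 + x2 + x3) / 2"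
    by (simp add: BR_def b1_def field_simps)
  note br = this
  show ?thesis unfolding chi_def br e_half_of_int ..
qed

lemma chi_b2: "chi b2 (vec4 (real_of_int x0) (real_of_int x1) (real_of_int x2) (real_of_int x3)) = (if even (2*x0 - x1) then 1 else -1)"
proof -
  have "BR b2 (vec4 (real_of_int x0) (real_of_int x1) (real_of_int x2) (real_of_int x3)) = real_of_int (2*x0 - x1) / 2"
    by (simp add: BR_def b2_def field_simps)
  note br = this
  show ?thesis unfolding chi_def br e_half_of_int ..
qed

lemma chi_b3: "chi b3 (vec4 (real_of_int x0) (real_of_int x1) (real_of_int x2) (real_of_int x3)) = (if even (-x0 + 2*x1 - x2 - x3) then 1 else -1)"
proof -
  have "BR b3 (vec4 (real_of_int x0) (real_of_int x1) (real_of_int x2) (real_of_int x3)) = real_of_int (-x0 + 2*x1 - x2 - x3) / 2"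
    by (simp add: BR_def b3_def field_simps)
  note br = this
  show ?thesis unfolding chi_def br e_half_of_int ..
qed

definition M11 :: "real^4 \<Rightarrow> real^4" where
  "M11 d = vec4 (d$0) ((2) * d$0 - d$1) (d$0 - d$1 + d$3) (d$0 - d$1 + d$2)"

lemma id_1_1:
  assumes t: "Im \<tau> > 0"
  shows "(theta a1 b1 \<tau> z)^2 + (theta 0 0 \<tau> z)^2 = (theta a1 0 \<tau> z)^2 + (theta 0 b1 \<tau> z)^2"
proof (rule part2_core[OF t, where M=M11 and N=M11])
  show "2 *\<^sub>R a1 \<in> Lat" by (simp add: a1_def Lat_iff)
  show "b1 \<in> halfLat" by (simp add: b1_def halfLat_def all4)
  have "BR b1 (2 *\<^sub>R a1) = 1" by (simp add: BR_def a1_def b1_def)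
  then show "chi b1 (2 *\<^sub>R a1) = 1" unfolding chi_def by (simp add: e_of_real_int)
  show "M11 (M11 d) = d" for d by (simp add: M11_def vec_eq4)
  then show "M11 (M11 d) = d" for d .
  show "QR (M11 d) = QR d" for d by (simp add: M11_def QR_def BR_def algebra_simps)
  show "(1/2) *\<^sub>R (M11 d - d - 2 *\<^sub>R a1) \<in> Lat" if d: "d \<in> Lat" "chi b1 d = -1" for d
  proof -
    obtain x0 x1 x2 x3 where dx: "d = vec4 (real_of_int x0) (real_of_int x1) (real_of_int x2) (real_of_int x3)"
      using Lat_obtain[OF d(1)] by blast
    have o: "odd (x0 - x1 + x2 + x3)" using d(2) unfolding dx chi_b1 by (auto split: if_splits)
    show ?thesis
    proof (rule Lat_half_vec)
      show "even ((x0) - x0 - 0)" using o by presburger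
      show "even (((2) * x0 - x1) - x1 - 0)" using o by presburger
      show "even ((x0 - x1 + x3) - x2 - 1)" using o by presburger
      show "even ((x0 - x1 + x2) - x3 - 1)" using o by presburger
      show "M11 d - d - 2 *\<^sub>R a1 = vec4 (real_of_int ((x0) - x0 - 0)) (real_of_int (((2) * x0 - x1) - x1 - 0)) (real_of_int ((x0 - x1 + x3) - x2 - 1)) (real_of_int ((x0 - x1 + x2) - x3 - 1))"
        by (simp add: dx M11_def a1_def vec_eq4)
    qed
  qed
  then show "(1/2) *\<^sub>R (M11 d - d - 2 *\<^sub>R a1) \<in> Lat" if d: "d \<in> Lat" "chi b1 d = -1" for d
    using d .
qed

definition M12 :: "real^4 \<Rightarrow> real^4" where
  "M12 d = vec4 (- d$0) (- d$1) (- d$1 + d$2) (- d$1 + d$3)"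

lemma id_1_2:
  assumes t: "Im \<tau> > 0"
  shows "(theta a1 b2 \<tau> z)^2 + (theta 0 0 \<tau> z)^2 = (theta a1 0 \<tau> z)^2 + (theta 0 b2 \<tau> z)^2"
proof (rule part2_core[OF t, where M=M12 and N=M12])
  show "2 *\<^sub>R a1 \<in> Lat" by (simp add: a1_def Lat_iff)
  show "b2 \<in> halfLat" by (simp add: b2_def halfLat_def all4)
  have "BR b2 (2 *\<^sub>R a1) = 0" by (simp add: BR_def a1_def b2_def)
  then show "chi b2 (2 *\<^sub>R a1) = 1" unfolding chi_def by (simp add: e_of_real_int)
  show "M12 (M12 d) = d" for d by (simp add: M12_def vec_eq4)
  then show "M12 (M12 d) = d" for d .
  show "QR (M12 d) = QR d" for d by (simp add: M12_def QR_def BR_def algebra_simps)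
  show "(1/2) *\<^sub>R (M12 d - d - 2 *\<^sub>R a1) \<in> Lat" if d: "d \<in> Lat" "chi b2 d = -1" for d
  proof -
    obtain x0 x1 x2 x3 where dx: "d = vec4 (real_of_int x0) (real_of_int x1) (real_of_int x2) (real_of_int x3)"
      using Lat_obtain[OF d(1)] by blast
    have o: "odd (2*x0 - x1)" using d(2) unfolding dx chi_b2 by (auto split: if_splits)
    show ?thesis
    proof (rule Lat_half_vec)
      show "even ((- x0) - x0 - 0)" using o by presburger
      show "even ((- x1) - x1 - 0)" using o by presburger
      show "even ((- x1 + x2) - x2 - 1)" using o by presburger
      show "even ((- x1 + x3) - x3 - 1)" using o by presburger
      show "M12 d - d - 2 *\<^sub>R a1 = vec4 (real_of_int ((- x0) - x0 - 0)) (real_of_int ((- x1) - x1 - 0)) (real_of_int ((- x1 + x2) - x2 - 1)) (real_of_int ((- x1 + x3) - x3 - 1))"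
        by (simp add: dx M12_def a1_def vec_eq4)
    qed
  qed
  then show "(1/2) *\<^sub>R (M12 d - d - 2 *\<^sub>R a1) \<in> Lat" if d: "d \<in> Lat" "chi b2 d = -1" for d
    using d .
qed

definition M13 :: "real^4 \<Rightarrow> real^4" where
  "M13 d = vec4 (- d$0) ((-2) * d$0 + d$1) (- d$0 + d$3) (- d$0 + d$2)"

lemma id_1_3:
  assumes t: "Im \<tau> > 0"
  shows "(theta a1 b3 \<tau> z)^2 + (theta 0 0 \<tau> z)^2 = (theta a1 0 \<tau> z)^2 + (theta 0 b3 \<tau> z)^2"
proof (rule part2_core[OF t, where M=M13 and N=M13])
  show "2 *\<^sub>R a1 \<in> Lat" by (simp add: a1_def Lat_iff)
  show "b3 \<in> halfLat" by (simp add: b3_def halfLat_def all4)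
  have "BR b3 (2 *\<^sub>R a1) = -1" by (simp add: BR_def a1_def b3_def)
  then show "chi b3 (2 *\<^sub>R a1) = 1" unfolding chi_def by (simp add: e_of_real_int)
  show "M13 (M13 d) = d" for d by (simp add: M13_def vec_eq4)
  then show "M13 (M13 d) = d" for d .
  show "QR (M13 d) = QR d" for d by (simp add: M13_def QR_def BR_def algebra_simps)
  show "(1/2) *\<^sub>R (M13 d - d - 2 *\<^sub>R a1) \<in> Lat" if d: "d \<in> Lat" "chi b3 d = -1" for d
  proof -
    obtain x0 x1 x2 x3 where dx: "d = vec4 (real_of_int x0) (real_of_int x1) (real_of_int x2) (real_of_int x3)"
      using Lat_obtain[OF d(1)] by blast
    have o: "odd (-x0 + 2*x1 - x2 - x3)" using d(2) unfolding dx chi_b3 by (auto split: if_splits)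
    show ?thesis
    proof (rule Lat_half_vec)
      show "even ((- x0) - x0 - 0)" using o by presburger
      show "even (((-2) * x0 + x1) - x1 - 0)" using o by presburger
      show "even ((- x0 + x3) - x2 - 1)" using o by presburger
      show "even ((- x0 + x2) - x3 - 1)" using o by presburger
      show "M13 d - d - 2 *\<^sub>R a1 = vec4 (real_of_int ((- x0) - x0 - 0)) (real_of_int (((-2) * x0 + x1) - x1 - 0)) (real_of_int ((- x0 + x3) - x2 - 1)) (real_of_int ((- x0 + x2) - x3 - 1))"
        by (simp add: dx M13_def a1_def vec_eq4)
    qed
  qed
  then show "(1/2) *\<^sub>R (M13 d - d - 2 *\<^sub>R a1) \<in> Lat" if d: "d \<in> Lat" "chi b3 d = -1" for d
    using d .
qed

definition M21 :: "real^4 \<Rightarrow> real^4" where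
  "M21 d = vec4 (- d$1 + d$2 + d$3) (- d$1 + (2) * d$2) (d$2) (d$0 - d$1 + d$2)"

lemma id_2_1:
  assumes t: "Im \<tau> > 0"
  shows "(theta a2 b1 \<tau> z)^2 + (theta 0 0 \<tau> z)^2 = (theta a2 0 \<tau> z)^2 + (theta 0 b1 \<tau> z)^2"
proof (rule part2_core[OF t, where M=M21 and N=M21])
  show "2 *\<^sub>R a2 \<in> Lat" by (simp add: a2_def Lat_iff)
  show "b1 \<in> halfLat" by (simp add: b1_def halfLat_def all4)
  have "BR b1 (2 *\<^sub>R a2) = 1" by (simp add: BR_def a2_def b1_def)
  then show "chi b1 (2 *\<^sub>R a2) = 1" unfolding chi_def by (simp add: e_of_real_int)
  show "M21 (M21 d) = d" for d by (simp add: M21_def vec_eq4)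
  then show "M21 (M21 d) = d" for d .
  show "QR (M21 d) = QR d" for d by (simp add: M21_def QR_def BR_def algebra_simps)
  show "(1/2) *\<^sub>R (M21 d - d - 2 *\<^sub>R a2) \<in> Lat" if d: "d \<in> Lat" "chi b1 d = -1" for d
  proof -
    obtain x0 x1 x2 x3 where dx: "d = vec4 (real_of_int x0) (real_of_int x1) (real_of_int x2) (real_of_int x3)"
      using Lat_obtain[OF d(1)] by blast
    have o: "odd (x0 - x1 + x2 + x3)" using d(2) unfolding dx chi_b1 by (auto split: if_splits)
    show ?thesis
    proof (rule Lat_half_vec)
      show "even ((- x1 + x2 + x3) - x0 - 1)" using o by presburger
      show "even ((- x1 + (2) * x2) - x1 - 0)" using o by presburger
      show "even ((x2) - x2 - 0)" using o by presburger
      show "even ((x0 - x1 + x2) - x3 - 1)" using o by presburger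
      show "M21 d - d - 2 *\<^sub>R a2 = vec4 (real_of_int ((- x1 + x2 + x3) - x0 - 1)) (real_of_int ((- x1 + (2) * x2) - x1 - 0)) (real_of_int ((x2) - x2 - 0)) (real_of_int ((x0 - x1 + x2) - x3 - 1))"
        by (simp add: dx M21_def a2_def vec_eq4)
    qed
  qed
  then show "(1/2) *\<^sub>R (M21 d - d - 2 *\<^sub>R a2) \<in> Lat" if d: "d \<in> Lat" "chi b1 d = -1" for d
    using d .
qed

definition M22 :: "real^4 \<Rightarrow> real^4" where
  "M22 d = vec4 (d$0 - d$1) (- d$1) (- d$2) (- d$1 + d$3)"

lemma id_2_2:
  assumes t: "Im \<tau> > 0"
  shows "(theta a2 b2 \<tau> z)^2 + (theta 0 0 \<tau> z)^2 = (theta a2 0 \<tau> z)^2 + (theta 0 b2 \<tau> z)^2"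
proof (rule part2_core[OF t, where M=M22 and N=M22])
  show "2 *\<^sub>R a2 \<in> Lat" by (simp add: a2_def Lat_iff)
  show "b2 \<in> halfLat" by (simp add: b2_def halfLat_def all4)
  have "BR b2 (2 *\<^sub>R a2) = 1" by (simp add: BR_def a2_def b2_def)
  then show "chi b2 (2 *\<^sub>R a2) = 1" unfolding chi_def by (simp add: e_of_real_int)
  show "M22 (M22 d) = d" for d by (simp add: M22_def vec_eq4)
  then show "M22 (M22 d) = d" for d .
  show "QR (M22 d) = QR d" for d by (simp add: M22_def QR_def BR_def algebra_simps)
  show "(1/2) *\<^sub>R (M22 d - d - 2 *\<^sub>R a2) \<in> Lat" if d: "d \<in> Lat" "chi b2 d = -1" for d
  proof -
    obtain x0 x1 x2 x3 where dx: "d = vec4 (real_of_int x0) (real_of_int x1) (real_of_int x2) (real_of_int x3)"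
      using Lat_obtain[OF d(1)] by blast
    have o: "odd (2*x0 - x1)" using d(2) unfolding dx chi_b2 by (auto split: if_splits)
    show ?thesis
    proof (rule Lat_half_vec)
      show "even ((x0 - x1) - x0 - 1)" using o by presburger
      show "even ((- x1) - x1 - 0)" using o by presburger
      show "even ((- x2) - x2 - 0)" using o by presburger
      show "even ((- x1 + x3) - x3 - 1)" using o by presburger
      show "M22 d - d - 2 *\<^sub>R a2 = vec4 (real_of_int ((x0 - x1) - x0 - 1)) (real_of_int ((- x1) - x1 - 0)) (real_of_int ((- x2) - x2 - 0)) (real_of_int ((- x1 + x3) - x3 - 1))"
        by (simp add: dx M22_def a2_def vec_eq4)
    qed
  qed
  then show "(1/2) *\<^sub>R (M22 d - d - 2 *\<^sub>R a2) \<in> Lat" if d: "d \<in> Lat" "chi b2 d = -1" for d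
    using d .
qed

definition M23 :: "real^4 \<Rightarrow> real^4" where
  "M23 d = vec4 (d$2 - d$3) (- d$1 + (2) * d$2) (d$2) (- d$0 + d$2)"

lemma id_2_3:
  assumes t: "Im \<tau> > 0"
  shows "(theta a2 b3 \<tau> z)^2 + (theta 0 0 \<tau> z)^2 = (theta a2 0 \<tau> z)^2 + (theta 0 b3 \<tau> z)^2"
proof (rule part2_core[OF t, where M=M23 and N=M23])
  show "2 *\<^sub>R a2 \<in> Lat" by (simp add: a2_def Lat_iff)
  show "b3 \<in> halfLat" by (simp add: b3_def halfLat_def all4)
  have "BR b3 (2 *\<^sub>R a2) = -1" by (simp add: BR_def a2_def b3_def)
  then show "chi b3 (2 *\<^sub>R a2) = 1" unfolding chi_def by (simp add: e_of_real_int)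
  show "M23 (M23 d) = d" for d by (simp add: M23_def vec_eq4)
  then show "M23 (M23 d) = d" for d .
  show "QR (M23 d) = QR d" for d by (simp add: M23_def QR_def BR_def algebra_simps)
  show "(1/2) *\<^sub>R (M23 d - d - 2 *\<^sub>R a2) \<in> Lat" if d: "d \<in> Lat" "chi b3 d = -1" for d
  proof -
    obtain x0 x1 x2 x3 where dx: "d = vec4 (real_of_int x0) (real_of_int x1) (real_of_int x2) (real_of_int x3)"
      using Lat_obtain[OF d(1)] by blast
    have o: "odd (-x0 + 2*x1 - x2 - x3)" using d(2) unfolding dx chi_b3 by (auto split: if_splits)
    show ?thesis
    proof (rule Lat_half_vec)
      show "even ((x2 - x3) - x0 - 1)" using o by presburger
      show "even ((- x1 + (2) * x2) - x1 - 0)" using o by presburger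
      show "even ((x2) - x2 - 0)" using o by presburger
      show "even ((- x0 + x2) - x3 - 1)" using o by presburger
      show "M23 d - d - 2 *\<^sub>R a2 = vec4 (real_of_int ((x2 - x3) - x0 - 1)) (real_of_int ((- x1 + (2) * x2) - x1 - 0)) (real_of_int ((x2) - x2 - 0)) (real_of_int ((- x0 + x2) - x3 - 1))"
        by (simp add: dx M23_def a2_def vec_eq4)
    qed
  qed
  then show "(1/2) *\<^sub>R (M23 d - d - 2 *\<^sub>R a2) \<in> Lat" if d: "d \<in> Lat" "chi b3 d = -1" for d
    using d .
qed

definition M31 :: "real^4 \<Rightarrow> real^4" where
  "M31 d = vec4 (d$1 - d$2 - d$3) (d$1 + (-2) * d$3) (- d$0 + d$1 - d$3) (- d$3)"

lemma id_3_1: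
  assumes t: "Im \<tau> > 0"
  shows "(theta a3 b1 \<tau> z)^2 + (theta 0 0 \<tau> z)^2 = (theta a3 0 \<tau> z)^2 + (theta 0 b1 \<tau> z)^2"
proof (rule part2_core[OF t, where M=M31 and N=M31])
  show "2 *\<^sub>R a3 \<in> Lat" by (simp add: a3_def Lat_iff)
  show "b1 \<in> halfLat" by (simp add: b1_def halfLat_def all4)
  have "BR b1 (2 *\<^sub>R a3) = 1" by (simp add: BR_def a3_def b1_def)
  then show "chi b1 (2 *\<^sub>R a3) = 1" unfolding chi_def by (simp add: e_of_real_int)
  show "M31 (M31 d) = d" for d by (simp add: M31_def vec_eq4)
  then show "M31 (M31 d) = d" for d .
  show "QR (M31 d) = QR d" for d by (simp add: M31_def QR_def BR_def algebra_simps)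
  show "(1/2) *\<^sub>R (M31 d - d - 2 *\<^sub>R a3) \<in> Lat" if d: "d \<in> Lat" "chi b1 d = -1" for d
  proof -
    obtain x0 x1 x2 x3 where dx: "d = vec4 (real_of_int x0) (real_of_int x1) (real_of_int x2) (real_of_int x3)"
      using Lat_obtain[OF d(1)] by blast
    have o: "odd (x0 - x1 + x2 + x3)" using d(2) unfolding dx chi_b1 by (auto split: if_splits)
    show ?thesis
    proof (rule Lat_half_vec)
      show "even ((x1 - x2 - x3) - x0 - 1)" using o by presburger
      show "even ((x1 + (-2) * x3) - x1 - 0)" using o by presburger
      show "even ((- x0 + x1 - x3) - x2 - 1)" using o by presburger
      show "even ((- x3) - x3 - 0)" using o by presburger
      show "M31 d - d - 2 *\<^sub>R a3 = vec4 (real_of_int ((x1 - x2 - x3) - x0 - 1)) (real_of_int ((x1 + (-2) * x3) - x1 - 0)) (real_of_int ((- x0 + x1 - x3) - x2 - 1)) (real_of_int ((- x3) - x3 - 0))"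
        by (simp add: dx M31_def a3_def vec_eq4)
    qed
  qed
  then show "(1/2) *\<^sub>R (M31 d - d - 2 *\<^sub>R a3) \<in> Lat" if d: "d \<in> Lat" "chi b1 d = -1" for d
    using d .
qed

definition M32 :: "real^4 \<Rightarrow> real^4" where
  "M32 d = vec4 (d$0 - d$1) (- d$1) (- d$1 + d$2) (- d$3)"

lemma id_3_2:
  assumes t: "Im \<tau> > 0"
  shows "(theta a3 b2 \<tau> z)^2 + (theta 0 0 \<tau> z)^2 = (theta a3 0 \<tau> z)^2 + (theta 0 b2 \<tau> z)^2"
proof (rule part2_core[OF t, where M=M32 and N=M32])
  show "2 *\<^sub>R a3 \<in> Lat" by (simp add: a3_def Lat_iff)
  show "b2 \<in> halfLat" by (simp add: b2_def halfLat_def all4)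
  have "BR b2 (2 *\<^sub>R a3) = 1" by (simp add: BR_def a3_def b2_def)
  then show "chi b2 (2 *\<^sub>R a3) = 1" unfolding chi_def by (simp add: e_of_real_int)
  show "M32 (M32 d) = d" for d by (simp add: M32_def vec_eq4)
  then show "M32 (M32 d) = d" for d .
  show "QR (M32 d) = QR d" for d by (simp add: M32_def QR_def BR_def algebra_simps)
  show "(1/2) *\<^sub>R (M32 d - d - 2 *\<^sub>R a3) \<in> Lat" if d: "d \<in> Lat" "chi b2 d = -1" for d
  proof -
    obtain x0 x1 x2 x3 where dx: "d = vec4 (real_of_int x0) (real_of_int x1) (real_of_int x2) (real_of_int x3)"
      using Lat_obtain[OF d(1)] by blast
    have o: "odd (2*x0 - x1)" using d(2) unfolding dx chi_b2 by (auto split: if_splits)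
    show ?thesis
    proof (rule Lat_half_vec)
      show "even ((x0 - x1) - x0 - 1)" using o by presburger
      show "even ((- x1) - x1 - 0)" using o by presburger
      show "even ((- x1 + x2) - x2 - 1)" using o by presburger
      show "even ((- x3) - x3 - 0)" using o by presburger
      show "M32 d - d - 2 *\<^sub>R a3 = vec4 (real_of_int ((x0 - x1) - x0 - 1)) (real_of_int ((- x1) - x1 - 0)) (real_of_int ((- x1 + x2) - x2 - 1)) (real_of_int ((- x3) - x3 - 0))"
        by (simp add: dx M32_def a3_def vec_eq4)
    qed
  qed
  then show "(1/2) *\<^sub>R (M32 d - d - 2 *\<^sub>R a3) \<in> Lat" if d: "d \<in> Lat" "chi b2 d = -1" for d
    using d .
qed

definition M33 :: "real^4 \<Rightarrow> real^4" where
  "M33 d = vec4 (- d$2 + d$3) (- d$1 + (2) * d$3) (- d$0 + d$3) (d$3)"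

lemma id_3_3:
  assumes t: "Im \<tau> > 0"
  shows "(theta a3 b3 \<tau> z)^2 + (theta 0 0 \<tau> z)^2 = (theta a3 0 \<tau> z)^2 + (theta 0 b3 \<tau> z)^2"
proof (rule part2_core[OF t, where M=M33 and N=M33])
  show "2 *\<^sub>R a3 \<in> Lat" by (simp add: a3_def Lat_iff)
  show "b3 \<in> halfLat" by (simp add: b3_def halfLat_def all4)
  have "BR b3 (2 *\<^sub>R a3) = -1" by (simp add: BR_def a3_def b3_def)
  then show "chi b3 (2 *\<^sub>R a3) = 1" unfolding chi_def by (simp add: e_of_real_int)
  show "M33 (M33 d) = d" for d by (simp add: M33_def vec_eq4)
  then show "M33 (M33 d) = d" for d .
  show "QR (M33 d) = QR d" for d by (simp add: M33_def QR_def BR_def algebra_simps)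
  show "(1/2) *\<^sub>R (M33 d - d - 2 *\<^sub>R a3) \<in> Lat" if d: "d \<in> Lat" "chi b3 d = -1" for d
  proof -
    obtain x0 x1 x2 x3 where dx: "d = vec4 (real_of_int x0) (real_of_int x1) (real_of_int x2) (real_of_int x3)"
      using Lat_obtain[OF d(1)] by blast
    have o: "odd (-x0 + 2*x1 - x2 - x3)" using d(2) unfolding dx chi_b3 by (auto split: if_splits)
    show ?thesis
    proof (rule Lat_half_vec)
      show "even ((- x2 + x3) - x0 - 1)" using o by presburger
      show "even ((- x1 + (2) * x3) - x1 - 0)" using o by presburger
      show "even ((- x0 + x3) - x2 - 1)" using o by presburger
      show "even ((x3) - x3 - 0)" using o by presburger
      show "M33 d - d - 2 *\<^sub>R a3 = vec4 (real_of_int ((- x2 + x3) - x0 - 1)) (real_of_int ((- x1 + (2) * x3) - x1 - 0)) (real_of_int ((- x0 + x3) - x2 - 1)) (real_of_int ((x3) - x3 - 0))"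
        by (simp add: dx M33_def a3_def vec_eq4)
    qed
  qed
  then show "(1/2) *\<^sub>R (M33 d - d - 2 *\<^sub>R a3) \<in> Lat" if d: "d \<in> Lat" "chi b3 d = -1" for d
    using d .
qed


lemma Lat_shift:
  assumes l: "l \<in> Lat"
  shows "infsum f Lat = infsum (\<lambda>u. f (u + l)) Lat"
  by (rule infsum_reindex_bij_witness[of Lat "\<lambda>b. b + l" "\<lambda>a. a - l"])
     (auto intro: Lat_add Lat_diff l)

lemma chi_diff: "chi \<beta> (x - l) = chi \<beta> x * chi \<beta> (- l)"
  by (metis chi_add diff_conv_add_uminus)

lemma theta_shift:
  assumes l: "l \<in> Lat" and b: "\<beta> \<in> halfLat"
  shows "(theta (\<alpha> + l) \<beta> \<tau> z)^2 = (theta \<alpha> \<beta> \<tau> z)^2"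
proof -
  have "theta (\<alpha> + l) \<beta> \<tau> z = (\<Sum>\<^sub>\<infinity>v\<in>Lat. chi \<beta> v * ft \<tau> z (\<alpha> + l + v))"
    unfolding theta_alt by (simp add: add.assoc)
  also have "\<dots> = (\<Sum>\<^sub>\<infinity>u\<in>Lat. chi \<beta> (u + - l) * ft \<tau> z (\<alpha> + l + (u + - l)))"
    by (rule Lat_shift[OF Lat_neg[OF l]])
  also have "\<dots> = (\<Sum>\<^sub>\<infinity>u\<in>Lat. chi \<beta> (- l) * (chi \<beta> u * ft \<tau> z (\<alpha> + u)))"
    by (rule infsum_cong) (simp add: chi_diff algebra_simps)
  also have "\<dots> = chi \<beta> (- l) * theta \<alpha> \<beta> \<tau> z"
    unfolding theta_alt by (rule infsum_cmult_right')
  finally have "theta (\<alpha> + l) \<beta> \<tau> z = chi \<beta> (- l) * theta \<alpha> \<beta> \<tau> z" .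
  moreover have "chi \<beta> (- l) * chi \<beta> (- l) = 1" by (rule chi_sq[OF b Lat_neg[OF l]])
  ultimately show ?thesis by (simp add: power2_eq_square algebra_simps)
qed

lemma theta_Lsharp:
  assumes h: "h \<in> Lsharp"
  shows "theta \<alpha> (\<beta> + h) \<tau> z = theta \<alpha> \<beta> \<tau> z"
  unfolding theta_alt
proof (rule infsum_cong)
  fix v assume v: "v \<in> Lat"
  have "chi (\<beta> + h) v = chi \<beta> v * chi h v" unfolding chi_def BR_add1 by (simp add: e_add)
  then show "chi (\<beta> + h) v * ft \<tau> z (\<alpha> + v) = chi \<beta> v * ft \<tau> z (\<alpha> + v)"
    using chi_Lsharp[OF h v] by simp
qed

lemma Lsharp_intro:
  assumes "2*h$0 - h$1 \<in> \<int>" "-h$0 + 2*h$1 - h$2 - h$3 \<in> \<int>" "-h$1 + 2*h$2 \<in> \<int>" "-h$1 + 2*h$3 \<in> \<int>"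
  shows "h \<in> Lsharp"
  unfolding Lsharp_def
proof (intro CollectI ballI)
  fix l assume l: "l \<in> Lat"
  then have li: "l$0 \<in> \<int>" "l$1 \<in> \<int>" "l$2 \<in> \<int>" "l$3 \<in> \<int>" by (auto simp: Lat_iff)
  have "BR h l = l$0 * (2*h$0 - h$1) + l$1 * (-h$0 + 2*h$1 - h$2 - h$3) + l$2 * (-h$1 + 2*h$2) + l$3 * (-h$1 + 2*h$3)"
    unfolding BR_def by (simp add: algebra_simps)
  also have "\<dots> \<in> \<int>"
    using Ints_add[OF Ints_add[OF Ints_add[OF Ints_mult[OF li(1) assms(1)] Ints_mult[OF li(2) assms(2)]] Ints_mult[OF li(3) assms(3)]] Ints_mult[OF li(4) assms(4)]] .
  finally show "Bf (cvec h) (cvec l) \<in> \<int>" unfolding Bf_cvec by simp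
qed

lemma Lsharp_dest:
  assumes "h \<in> Lsharp"
  shows "2*h$0 - h$1 \<in> \<int>" "-h$0 + 2*h$1 - h$2 - h$3 \<in> \<int>" "-h$1 + 2*h$2 \<in> \<int>" "-h$1 + 2*h$3 \<in> \<int>"
proof -
  have *: "BR h l \<in> \<int>" if "l \<in> Lat" for l
    using assms that unfolding Lsharp_def Bf_cvec by auto
  show "2*h$0 - h$1 \<in> \<int>" using *[of "vec4 1 0 0 0"] by (simp add: Lat_iff BR_def algebra_simps)
  show "-h$0 + 2*h$1 - h$2 - h$3 \<in> \<int>" using *[of "vec4 0 1 0 0"] by (simp add: Lat_iff BR_def algebra_simps)
  show "-h$1 + 2*h$2 \<in> \<int>" using *[of "vec4 0 0 1 0"] by (simp add: Lat_iff BR_def algebra_simps)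
  show "-h$1 + 2*h$3 \<in> \<int>" using *[of "vec4 0 0 0 1"] by (simp add: Lat_iff BR_def algebra_simps)
qed

lemma half_sub_Int: "x = real_of_int k / 2 \<Longrightarrow> even (k - c) \<Longrightarrow> x - real_of_int c / 2 \<in> \<int>"
proof -
  assume x: "x = real_of_int k / 2" and e: "even (k - c)"
  then obtain q where "k - c = 2 * q" by (elim evenE)
  then have "real_of_int k - real_of_int c = 2 * real_of_int q" by (metis of_int_diff of_int_mult of_int_numeral)
  then have "x - real_of_int c / 2 = real_of_int q" using x by (simp add: field_simps)
  then show ?thesis by simp
qed

lemma Lat_sub_vec:
  assumes "\<alpha>$0 = real_of_int k0 / 2" "\<alpha>$1 = real_of_int k1 / 2" "\<alpha>$2 = real_of_int k2 / 2" "\<alpha>$3 = real_of_int k3 / 2"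
    and "even (k0 - c0)" "even (k1 - c1)" "even (k2 - c2)" "even (k3 - c3)"
    and "a = vec4 (real_of_int c0 / 2) (real_of_int c1 / 2) (real_of_int c2 / 2) (real_of_int c3 / 2)"
  shows "\<alpha> - a \<in> Lat"
  unfolding Lat_iff assms(9) using half_sub_Int assms(1-8) by simp

lemma R1: assumes "\<alpha> \<in> Lsharp" shows "\<exists>a\<in>Aset. \<alpha> - a \<in> Lat"
proof -
  note L = Lsharp_dest[OF assms]
  obtain m0 where m0: "2*\<alpha>$0 - \<alpha>$1 = real_of_int m0" using L(1) by (metis Ints_cases)
  obtain m1 where m1: "-\<alpha>$0 + 2*\<alpha>$1 - \<alpha>$2 - \<alpha>$3 = real_of_int m1" using L(2) by (metis Ints_cases)
  obtain m2 where m2: "-\<alpha>$1 + 2*\<alpha>$2 = real_of_int m2" using L(3) by (metis Ints_cases)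
  obtain m3 where m3: "-\<alpha>$1 + 2*\<alpha>$3 = real_of_int m3" using L(4) by (metis Ints_cases)
  define k0 where "k0 = 2*m0+2*m1+m2+m3"
  define k1 where "k1 = 2*m0+4*m1+2*m2+2*m3"
  define k2 where "k2 = m0+2*m1+2*m2+m3"
  define k3 where "k3 = m0+2*m1+m2+2*m3"
  have e0: "\<alpha>$0 = real_of_int k0 / 2" unfolding k0_def using m0 m1 m2 m3 by (simp; linarith)
  have e1: "\<alpha>$1 = real_of_int k1 / 2" unfolding k1_def using m0 m1 m2 m3 by (simp; linarith)
  have e2: "\<alpha>$2 = real_of_int k2 / 2" unfolding k2_def using m0 m1 m2 m3 by (simp; linarith)
  have e3: "\<alpha>$3 = real_of_int k3 / 2" unfolding k3_def using m0 m1 m2 m3 by (simp; linarith)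
  have z: "(0::real^4) = vec4 (real_of_int 0 / 2) (real_of_int 0 / 2) (real_of_int 0 / 2) (real_of_int 0 / 2)"
    by (simp add: vec_eq4)
  have A1: "a1 = vec4 (real_of_int 0 / 2) (real_of_int 0 / 2) (real_of_int 1 / 2) (real_of_int 1 / 2)"
    by (simp add: a1_def)
  have A2: "a2 = vec4 (real_of_int 1 / 2) (real_of_int 0 / 2) (real_of_int 0 / 2) (real_of_int 1 / 2)"
    by (simp add: a2_def)
  have A3: "a3 = vec4 (real_of_int 1 / 2) (real_of_int 0 / 2) (real_of_int 1 / 2) (real_of_int 0 / 2)"
    by (simp add: a3_def)
  have "(even (k0 - 0) \<and> even (k1 - 0) \<and> even (k2 - 0) \<and> even (k3 - 0)) \<or>
        (even (k0 - 0) \<and> even (k1 - 0) \<and> even (k2 - 1) \<and> even (k3 - 1)) \<or>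
        (even (k0 - 1) \<and> even (k1 - 0) \<and> even (k2 - 0) \<and> even (k3 - 1)) \<or>
        (even (k0 - 1) \<and> even (k1 - 0) \<and> even (k2 - 1) \<and> even (k3 - 0))"
    unfolding k0_def k1_def k2_def k3_def by presburger
  then show ?thesis
  proof (elim disjE conjE)
    assume "even (k0 - 0)" "even (k1 - 0)" "even (k2 - 0)" "even (k3 - 0)"
    then have "\<alpha> - 0 \<in> Lat" by (rule Lat_sub_vec[OF e0 e1 e2 e3 _ _ _ _ z])
    then show ?thesis unfolding Aset_eq by blast
  next
    assume "even (k0 - 0)" "even (k1 - 0)" "even (k2 - 1)" "even (k3 - 1)"
    then have "\<alpha> - a1 \<in> Lat" by (rule Lat_sub_vec[OF e0 e1 e2 e3 _ _ _ _ A1])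
    then show ?thesis unfolding Aset_eq by blast
  next
    assume "even (k0 - 1)" "even (k1 - 0)" "even (k2 - 0)" "even (k3 - 1)"
    then have "\<alpha> - a2 \<in> Lat" by (rule Lat_sub_vec[OF e0 e1 e2 e3 _ _ _ _ A2])
    then show ?thesis unfolding Aset_eq by blast
  next
    assume "even (k0 - 1)" "even (k1 - 0)" "even (k2 - 1)" "even (k3 - 0)"
    then have "\<alpha> - a3 \<in> Lat" by (rule Lat_sub_vec[OF e0 e1 e2 e3 _ _ _ _ A3])
    then show ?thesis unfolding Aset_eq by blast
  qed
qed

lemma Lsharp_sub_vec:
  assumes "\<beta>$0 = real_of_int n0 / 2" "\<beta>$1 = real_of_int n1 / 2" "\<beta>$2 = real_of_int n2 / 2" "\<beta>$3 = real_of_int n3 / 2"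
    and "b = vec4 (real_of_int c0 / 2) (real_of_int c1 / 2) (real_of_int c2 / 2) (real_of_int c3 / 2)"
    and "even (2*(n0-c0) - (n1-c1))" "even (-(n0-c0) + 2*(n1-c1) - (n2-c2) - (n3-c3))"
        "even (-(n1-c1) + 2*(n2-c2))" "even (-(n1-c1) + 2*(n3-c3))"
  shows "\<beta> - b \<in> Lsharp"
proof (rule Lsharp_intro)
  have h: "real_of_int p / 2 \<in> \<int>" if "even p" for p using that by (elim evenE) simp
  have "2 * (\<beta> - b) $ 0 - (\<beta> - b) $ 1 = real_of_int (2*(n0-c0) - (n1-c1)) / 2"
    by (simp add: assms(1-5) field_simps)
  note eq = this
  show "2 * (\<beta> - b) $ 0 - (\<beta> - b) $ 1 \<in> \<int>" unfolding eq by (rule h[OF assms(6)])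
  have "- (\<beta> - b) $ 0 + 2 * (\<beta> - b) $ 1 - (\<beta> - b) $ 2 - (\<beta> - b) $ 3 = real_of_int (-(n0-c0) + 2*(n1-c1) - (n2-c2) - (n3-c3)) / 2"
    by (simp add: assms(1-5) field_simps)
  note eq = this
  show "- (\<beta> - b) $ 0 + 2 * (\<beta> - b) $ 1 - (\<beta> - b) $ 2 - (\<beta> - b) $ 3 \<in> \<int>" unfolding eq by (rule h[OF assms(7)])
  have "- (\<beta> - b) $ 1 + 2 * (\<beta> - b) $ 2 = real_of_int (-(n1-c1) + 2*(n2-c2)) / 2"
    by (simp add: assms(1-5) field_simps)
  note eq = this
  show "- (\<beta> - b) $ 1 + 2 * (\<beta> - b) $ 2 \<in> \<int>" unfolding eq by (rule h[OF assms(8)])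
  have "- (\<beta> - b) $ 1 + 2 * (\<beta> - b) $ 3 = real_of_int (-(n1-c1) + 2*(n3-c3)) / 2"
    by (simp add: assms(1-5) field_simps)
  note eq = this
  show "- (\<beta> - b) $ 1 + 2 * (\<beta> - b) $ 3 \<in> \<int>" unfolding eq by (rule h[OF assms(9)])
qed

lemma R3: assumes "\<beta> \<in> halfLat" shows "\<exists>b\<in>Bset. \<beta> - b \<in> Lsharp"
proof -
  have "2 * \<beta>$i \<in> \<int>" for i using assms by (auto simp: halfLat_def)
  then obtain n0 n1 n2 n3 where "2 * \<beta>$0 = real_of_int n0" "2 * \<beta>$1 = real_of_int n1" "2 * \<beta>$2 = real_of_int n2" "2 * \<beta>$3 = real_of_int n3"
    by (metis Ints_cases)
  then have e: "\<beta>$0 = real_of_int n0 / 2" "\<beta>$1 = real_of_int n1 / 2" "\<beta>$2 = real_of_int n2 / 2" "\<beta>$3 = real_of_int n3 / 2"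
    by simp_all
  have z: "(0::real^4) = vec4 (real_of_int 0 / 2) (real_of_int 0 / 2) (real_of_int 0 / 2) (real_of_int 0 / 2)"
    by (simp add: vec_eq4)
  have B1: "b1 = vec4 (real_of_int 1 / 2) (real_of_int 1 / 2) (real_of_int 1 / 2) (real_of_int 1 / 2)"
    by (simp add: b1_def)
  have B2: "b2 = vec4 (real_of_int 1 / 2) (real_of_int 0 / 2) (real_of_int 0 / 2) (real_of_int 0 / 2)"
    by (simp add: b2_def)
  have B3: "b3 = vec4 (real_of_int 0 / 2) (real_of_int 1 / 2) (real_of_int 0 / 2) (real_of_int 0 / 2)"
    by (simp add: b3_def)
  have "(even (2*(n0-0) - (n1-0)) \<and> even (-(n0-0) + 2*(n1-0) - (n2-0) - (n3-0)) \<and> even (-(n1-0) + 2*(n2-0)) \<and> even (-(n1-0) + 2*(n3-0))) \<or>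
        (even (2*(n0-1) - (n1-1)) \<and> even (-(n0-1) + 2*(n1-1) - (n2-1) - (n3-1)) \<and> even (-(n1-1) + 2*(n2-1)) \<and> even (-(n1-1) + 2*(n3-1))) \<or>
        (even (2*(n0-1) - (n1-0)) \<and> even (-(n0-1) + 2*(n1-0) - (n2-0) - (n3-0)) \<and> even (-(n1-0) + 2*(n2-0)) \<and> even (-(n1-0) + 2*(n3-0))) \<or>
        (even (2*(n0-0) - (n1-1)) \<and> even (-(n0-0) + 2*(n1-1) - (n2-0) - (n3-0)) \<and> even (-(n1-1) + 2*(n2-0)) \<and> even (-(n1-1) + 2*(n3-0)))"
    by presburger
  then show ?thesis
  proof (elim disjE conjE)
    assume h: "even (2*(n0-0) - (n1-0))" "even (-(n0-0) + 2*(n1-0) - (n2-0) - (n3-0))" "even (-(n1-0) + 2*(n2-0))" "even (-(n1-0) + 2*(n3-0))"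
    have "\<beta> - 0 \<in> Lsharp" by (rule Lsharp_sub_vec[OF e z h])
    then show ?thesis unfolding Bset_eq by blast
  next
    assume h: "even (2*(n0-1) - (n1-1))" "even (-(n0-1) + 2*(n1-1) - (n2-1) - (n3-1))" "even (-(n1-1) + 2*(n2-1))" "even (-(n1-1) + 2*(n3-1))"
    have "\<beta> - b1 \<in> Lsharp" by (rule Lsharp_sub_vec[OF e B1 h])
    then show ?thesis unfolding Bset_eq by blast
  next
    assume h: "even (2*(n0-1) - (n1-0))" "even (-(n0-1) + 2*(n1-0) - (n2-0) - (n3-0))" "even (-(n1-0) + 2*(n2-0))" "even (-(n1-0) + 2*(n3-0))"
    have "\<beta> - b2 \<in> Lsharp" by (rule Lsharp_sub_vec[OF e B2 h])
    then show ?thesis unfolding Bset_eq by blast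
  next
    assume h: "even (2*(n0-0) - (n1-1))" "even (-(n0-0) + 2*(n1-1) - (n2-0) - (n3-0))" "even (-(n1-1) + 2*(n2-0))" "even (-(n1-1) + 2*(n3-0))"
    have "\<beta> - b3 \<in> Lsharp" by (rule Lsharp_sub_vec[OF e B3 h])
    then show ?thesis unfolding Bset_eq by blast
  qed
qed

lemma Bset_halfLat: "b \<in> Bset \<Longrightarrow> b \<in> halfLat"
  unfolding Bset_eq by (auto simp: b1_def b2_def b3_def halfLat_def all4)

lemma id_reps:
  assumes t: "Im \<tau> > 0" and a: "a \<in> Aset" and b: "b \<in> Bset"
  shows "(theta a b \<tau> z)^2 + (theta 0 0 \<tau> z)^2 = (theta a 0 \<tau> z)^2 + (theta 0 b \<tau> z)^2"
  using a b id_1_1[OF t] id_1_2[OF t] id_1_3[OF t] id_2_1[OF t] id_2_2[OF t] id_2_3[OF t]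
    id_3_1[OF t] id_3_2[OF t] id_3_3[OF t]
  unfolding Aset_eq Bset_eq by (auto simp: algebra_simps)

theorem part2:
  assumes a: "\<alpha> \<in> Lsharp" and b: "\<beta> \<in> halfLat" and t: "Im \<tau> > 0"
  shows "(theta \<alpha> \<beta> \<tau> z)^2 + (theta 0 0 \<tau> z)^2 = (theta \<alpha> 0 \<tau> z)^2 + (theta 0 \<beta> \<tau> z)^2"
proof -
  obtain a0 where a0: "a0 \<in> Aset" "\<alpha> - a0 \<in> Lat" using R1[OF a] by blast
  obtain b0 where b0: "b0 \<in> Bset" "\<beta> - b0 \<in> Lsharp" using R3[OF b] by blast
  have hb0: "b0 \<in> halfLat" by (rule Bset_halfLat[OF b0(1)])
  have h0: "(0::real^4) \<in> halfLat" by (simp add: halfLat_def)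
  have "\<alpha> = a0 + (\<alpha> - a0)" "\<beta> = b0 + (\<beta> - b0)" by simp_all
  then have e1: "(theta \<alpha> \<beta> \<tau> z)^2 = (theta a0 b0 \<tau> z)^2"
    and e2: "(theta \<alpha> 0 \<tau> z)^2 = (theta a0 0 \<tau> z)^2"
    and e3: "(theta 0 \<beta> \<tau> z)^2 = (theta 0 b0 \<tau> z)^2"
    using theta_shift[OF a0(2) hb0, of a0 \<tau> z] theta_shift[OF a0(2) h0, of a0 \<tau> z]
      theta_Lsharp[OF b0(2), of _ b0 \<tau> z]
    by metis+
  show ?thesis unfolding e1 e2 e3 by (rule id_reps[OF t a0(1) b0(1)])
qed


definition sS :: "complex \<Rightarrow> real^4 \<Rightarrow> complex^4" where
  "sS \<tau> \<gamma> = (\<chi> i. \<tau> * complex_of_real (\<gamma>$i))"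

lemma Bf_cvec_sS: "Bf (cvec x) (sS \<tau> \<gamma>) = \<tau> * complex_of_real (BR x \<gamma>)"
  unfolding Bf_expand BR_def sS_def by (simp add: algebra_simps)

lemma ft_Tshift: "ft \<tau> (z + cvec \<delta>) x = ft \<tau> z x * e (complex_of_real (BR x \<delta>))"
  unfolding ft_def Bf_add2 Bf_cvec e_add[symmetric] by (simp add: algebra_simps)

lemma theta_T: "theta \<alpha> \<beta> \<tau> (z + cvec \<delta>) = e (complex_of_real (BR \<alpha> \<delta>)) * theta \<alpha> (\<beta> + \<delta>) \<tau> z"
  unfolding theta_alt
proof (subst infsum_cmult_right'[symmetric], rule infsum_cong)
  fix v
  have "chi \<beta> v * ft \<tau> (z + cvec \<delta>) (\<alpha> + v) = chi \<beta> v * ft \<tau> z (\<alpha> + v) * e (complex_of_real (BR \<alpha> \<delta>)) * e (complex_of_real (BR \<delta> v))"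
    unfolding ft_Tshift BR_add1 by (simp add: e_add BR_sym[of v \<delta>] algebra_simps)
  also have "\<dots> = e (complex_of_real (BR \<alpha> \<delta>)) * (chi (\<beta> + \<delta>) v * ft \<tau> z (\<alpha> + v))"
    unfolding chi_def BR_add1 by (simp add: e_add algebra_simps)
  finally show "chi \<beta> v * ft \<tau> (z + cvec \<delta>) (\<alpha> + v) = e (complex_of_real (BR \<alpha> \<delta>)) * (chi (\<beta> + \<delta>) v * ft \<tau> z (\<alpha> + v))" .
qed

lemma ft_Sshift: "ft \<tau> (z + sS \<tau> \<gamma>) x = e (- (\<tau> * complex_of_real (QR \<gamma>)) - Bf (cvec \<gamma>) z) * ft \<tau> z (x + \<gamma>)"
  unfolding ft_def Bf_add2 Bf_cvec_sS e_add[symmetric] QR_add cvec_add Bf_add1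
  by (simp add: algebra_simps)

lemma theta_S: "theta \<alpha> \<beta> \<tau> (z + sS \<tau> \<gamma>) = e (- (\<tau> * complex_of_real (QR \<gamma>)) - Bf (cvec \<gamma>) z) * theta (\<alpha> + \<gamma>) \<beta> \<tau> z"
  unfolding theta_alt
proof (subst infsum_cmult_right'[symmetric], rule infsum_cong)
  fix v
  show "chi \<beta> v * ft \<tau> (z + sS \<tau> \<gamma>) (\<alpha> + v) = e (- (\<tau> * complex_of_real (QR \<gamma>)) - Bf (cvec \<gamma>) z) * (chi \<beta> v * ft \<tau> z (\<alpha> + \<gamma> + v))"
    unfolding ft_Sshift by (simp add: algebra_simps)
qed

abbreviation FF where "FF \<alpha> \<beta> \<tau> z \<equiv> (theta \<alpha> \<beta> \<tau> z)^2"

lemma e_sq_Lsharp: assumes "a \<in> Lsharp" "\<delta> \<in> halfLat" shows "(e (complex_of_real (BR a \<delta>)))^2 = 1"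
proof -
  have "BR a (2 *\<^sub>R \<delta>) \<in> \<int>"
    using assms(1) halfLat_double[OF assms(2)] unfolding Lsharp_def Bf_cvec by auto
  then have "2 * BR a \<delta> \<in> \<int>" by (simp only: BR_scale2)
  then have "BR a \<delta> + BR a \<delta> \<in> \<int>" by (simp only: mult_2)
  then have c: "complex_of_real (BR a \<delta> + BR a \<delta>) \<in> \<int>" by (simp only: of_real_in_Ints_iff)
  have "(e (complex_of_real (BR a \<delta>)))^2 = e (complex_of_real (BR a \<delta> + BR a \<delta>))"
    by (simp only: power2_eq_square of_real_add e_add)
  then show ?thesis using e_int[OF c] by (rule trans)
qed

lemma FF_T: assumes "a \<in> Lsharp" "\<delta> \<in> halfLat"
  shows "FF a \<beta> \<tau> (z + cvec \<delta>) = FF a (\<beta> + \<delta>) \<tau> z"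
  unfolding theta_T power_mult_distrib e_sq_Lsharp[OF assms] by simp

lemma FF_S: "FF \<alpha> \<beta> \<tau> (z + sS \<tau> \<gamma>) = (e (- (\<tau> * complex_of_real (QR \<gamma>)) - Bf (cvec \<gamma>) z))^2 * FF (\<alpha> + \<gamma>) \<beta> \<tau> z"
  unfolding theta_S power_mult_distrib ..

lemma FF_shiftL: assumes "l \<in> Lat" "\<beta> \<in> halfLat" "x = y + l" shows "FF x \<beta> \<tau> z = FF y \<beta> \<tau> z"
  unfolding assms(3) by (rule theta_shift[OF assms(1,2)])

lemma FF_shiftB: assumes "h \<in> Lsharp" "x = y + h" shows "FF \<alpha> x \<tau> z = FF \<alpha> y \<tau> z"
  unfolding assms(2) theta_Lsharp[OF assms(1)] ..

lemma a_Lsharp: "a1 \<in> Lsharp" "a2 \<in> Lsharp" "a3 \<in> Lsharp"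
  by (rule Lsharp_intro; simp add: a1_def a2_def a3_def)+

lemma zero_Lsharp: "(0::real^4) \<in> Lsharp" by (rule Lsharp_intro) simp_all

lemma b_half: "b1 \<in> halfLat" "b2 \<in> halfLat" "b3 \<in> halfLat" "(0::real^4) \<in> halfLat"
  by (auto simp: b1_def b2_def b3_def halfLat_def all4)

lemma Lat_vec4: "vec4 (real_of_int i0) (real_of_int i1) (real_of_int i2) (real_of_int i3) \<in> Lat"
  by (simp add: Lat_iff)

lemma Lat_Lsharp: "l \<in> Lat \<Longrightarrow> l \<in> Lsharp"
  by (rule Lsharp_intro) (auto simp: Lat_iff)


lemma TX: assumes t: "Im \<tau> > 0" and a: "a \<in> Lsharp" and d: "\<delta> \<in> halfLat"
  shows "FF a 0 \<tau> (z + cvec \<delta>) = FF a 0 \<tau> z + FF 0 \<delta> \<tau> z - FF 0 0 \<tau> z"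
  using FF_T[OF a d, of 0 \<tau> z] part2[OF a d t, of z] by (simp add: algebra_simps)

lemma SY: assumes t: "Im \<tau> > 0" and g: "\<gamma> \<in> Lsharp" and b: "b \<in> halfLat"
  shows "FF 0 b \<tau> (z + sS \<tau> \<gamma>) = (e (- (\<tau> * complex_of_real (QR \<gamma>)) - Bf (cvec \<gamma>) z))^2 * (FF \<gamma> 0 \<tau> z + FF 0 b \<tau> z - FF 0 0 \<tau> z)"
proof -
  have p: "FF \<gamma> b \<tau> z = FF \<gamma> 0 \<tau> z + FF 0 b \<tau> z - FF 0 0 \<tau> z"
    using part2[OF g b t, of z] by (simp add: eq_diff_eq)
  have "FF 0 b \<tau> (z + sS \<tau> \<gamma>) = (e (- (\<tau> * complex_of_real (QR \<gamma>)) - Bf (cvec \<gamma>) z))^2 * FF \<gamma> b \<tau> z"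
    using FF_S[of 0 b \<tau> z \<gamma>] by simp
  then show ?thesis unfolding p .
qed

lemma SX_0_1: "FF 0 0 \<tau> (z + sS \<tau> a1) = (e (- (\<tau> * complex_of_real (QR a1)) - Bf (cvec a1) z))^2 * FF a1 0 \<tau> z"
  unfolding FF_S by (rule arg_cong[where f="\<lambda>x. _ * x"], rule FF_shiftL[where l="vec4 (0) (0) (0) (0)"]) (simp_all add: Lat_iff b_half vec_eq4 a1_def a2_def a3_def b1_def b2_def b3_def)

lemma SX_0_2: "FF 0 0 \<tau> (z + sS \<tau> a2) = (e (- (\<tau> * complex_of_real (QR a2)) - Bf (cvec a2) z))^2 * FF a2 0 \<tau> z"
  unfolding FF_S by (rule arg_cong[where f="\<lambda>x. _ * x"], rule FF_shiftL[where l="vec4 (0) (0) (0) (0)"]) (simp_all add: Lat_iff b_half vec_eq4 a1_def a2_def a3_def b1_def b2_def b3_def)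

lemma SX_0_3: "FF 0 0 \<tau> (z + sS \<tau> a3) = (e (- (\<tau> * complex_of_real (QR a3)) - Bf (cvec a3) z))^2 * FF a3 0 \<tau> z"
  unfolding FF_S by (rule arg_cong[where f="\<lambda>x. _ * x"], rule FF_shiftL[where l="vec4 (0) (0) (0) (0)"]) (simp_all add: Lat_iff b_half vec_eq4 a1_def a2_def a3_def b1_def b2_def b3_def)

lemma SX_1_1: "FF a1 0 \<tau> (z + sS \<tau> a1) = (e (- (\<tau> * complex_of_real (QR a1)) - Bf (cvec a1) z))^2 * FF 0 0 \<tau> z"
  unfolding FF_S by (rule arg_cong[where f="\<lambda>x. _ * x"], rule FF_shiftL[where l="vec4 (0) (0) (1) (1)"]) (simp_all add: Lat_iff b_half vec_eq4 a1_def a2_def a3_def b1_def b2_def b3_def)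

lemma SX_1_2: "FF a1 0 \<tau> (z + sS \<tau> a2) = (e (- (\<tau> * complex_of_real (QR a2)) - Bf (cvec a2) z))^2 * FF a3 0 \<tau> z"
  unfolding FF_S by (rule arg_cong[where f="\<lambda>x. _ * x"], rule FF_shiftL[where l="vec4 (0) (0) (0) (1)"]) (simp_all add: Lat_iff b_half vec_eq4 a1_def a2_def a3_def b1_def b2_def b3_def)

lemma SX_1_3: "FF a1 0 \<tau> (z + sS \<tau> a3) = (e (- (\<tau> * complex_of_real (QR a3)) - Bf (cvec a3) z))^2 * FF a2 0 \<tau> z"
  unfolding FF_S by (rule arg_cong[where f="\<lambda>x. _ * x"], rule FF_shiftL[where l="vec4 (0) (0) (1) (0)"]) (simp_all add: Lat_iff b_half vec_eq4 a1_def a2_def a3_def b1_def b2_def b3_def)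

lemma SX_2_1: "FF a2 0 \<tau> (z + sS \<tau> a1) = (e (- (\<tau> * complex_of_real (QR a1)) - Bf (cvec a1) z))^2 * FF a3 0 \<tau> z"
  unfolding FF_S by (rule arg_cong[where f="\<lambda>x. _ * x"], rule FF_shiftL[where l="vec4 (0) (0) (0) (1)"]) (simp_all add: Lat_iff b_half vec_eq4 a1_def a2_def a3_def b1_def b2_def b3_def)

lemma SX_2_2: "FF a2 0 \<tau> (z + sS \<tau> a2) = (e (- (\<tau> * complex_of_real (QR a2)) - Bf (cvec a2) z))^2 * FF 0 0 \<tau> z"
  unfolding FF_S by (rule arg_cong[where f="\<lambda>x. _ * x"], rule FF_shiftL[where l="vec4 (1) (0) (0) (1)"]) (simp_all add: Lat_iff b_half vec_eq4 a1_def a2_def a3_def b1_def b2_def b3_def)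

lemma SX_2_3: "FF a2 0 \<tau> (z + sS \<tau> a3) = (e (- (\<tau> * complex_of_real (QR a3)) - Bf (cvec a3) z))^2 * FF a1 0 \<tau> z"
  unfolding FF_S by (rule arg_cong[where f="\<lambda>x. _ * x"], rule FF_shiftL[where l="vec4 (1) (0) (0) (0)"]) (simp_all add: Lat_iff b_half vec_eq4 a1_def a2_def a3_def b1_def b2_def b3_def)

lemma SX_3_1: "FF a3 0 \<tau> (z + sS \<tau> a1) = (e (- (\<tau> * complex_of_real (QR a1)) - Bf (cvec a1) z))^2 * FF a2 0 \<tau> z"
  unfolding FF_S by (rule arg_cong[where f="\<lambda>x. _ * x"], rule FF_shiftL[where l="vec4 (0) (0) (1) (0)"]) (simp_all add: Lat_iff b_half vec_eq4 a1_def a2_def a3_def b1_def b2_def b3_def)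

lemma SX_3_2: "FF a3 0 \<tau> (z + sS \<tau> a2) = (e (- (\<tau> * complex_of_real (QR a2)) - Bf (cvec a2) z))^2 * FF a1 0 \<tau> z"
  unfolding FF_S by (rule arg_cong[where f="\<lambda>x. _ * x"], rule FF_shiftL[where l="vec4 (1) (0) (0) (0)"]) (simp_all add: Lat_iff b_half vec_eq4 a1_def a2_def a3_def b1_def b2_def b3_def)

lemma SX_3_3: "FF a3 0 \<tau> (z + sS \<tau> a3) = (e (- (\<tau> * complex_of_real (QR a3)) - Bf (cvec a3) z))^2 * FF 0 0 \<tau> z"
  unfolding FF_S by (rule arg_cong[where f="\<lambda>x. _ * x"], rule FF_shiftL[where l="vec4 (1) (0) (1) (0)"]) (simp_all add: Lat_iff b_half vec_eq4 a1_def a2_def a3_def b1_def b2_def b3_def)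

lemma TY_0_1: "FF 0 0 \<tau> (z + cvec b1) = FF 0 b1 \<tau> z"
  unfolding FF_T[OF zero_Lsharp b_half(1)] by (rule FF_shiftB[where h="vec4 (0) (0) (0) (0)"]) (simp_all add: vec_eq4 a1_def a2_def a3_def b1_def b2_def b3_def, rule Lsharp_intro, simp_all)

lemma TY_0_2: "FF 0 0 \<tau> (z + cvec b2) = FF 0 b2 \<tau> z"
  unfolding FF_T[OF zero_Lsharp b_half(2)] by (rule FF_shiftB[where h="vec4 (0) (0) (0) (0)"]) (simp_all add: vec_eq4 a1_def a2_def a3_def b1_def b2_def b3_def, rule Lsharp_intro, simp_all)

lemma TY_0_3: "FF 0 0 \<tau> (z + cvec b3) = FF 0 b3 \<tau> z"
  unfolding FF_T[OF zero_Lsharp b_half(3)] by (rule FF_shiftB[where h="vec4 (0) (0) (0) (0)"]) (simp_all add: vec_eq4 a1_def a2_def a3_def b1_def b2_def b3_def, rule Lsharp_intro, simp_all)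

lemma TY_1_1: "FF 0 b1 \<tau> (z + cvec b1) = FF 0 0 \<tau> z"
  unfolding FF_T[OF zero_Lsharp b_half(1)] by (rule FF_shiftB[where h="vec4 (1) (1) (1) (1)"]) (simp_all add: vec_eq4 a1_def a2_def a3_def b1_def b2_def b3_def, rule Lsharp_intro, simp_all)

lemma TY_1_2: "FF 0 b1 \<tau> (z + cvec b2) = FF 0 b3 \<tau> z"
  unfolding FF_T[OF zero_Lsharp b_half(2)] by (rule FF_shiftB[where h="vec4 (1) (0) (1/2) (1/2)"]) (simp_all add: vec_eq4 a1_def a2_def a3_def b1_def b2_def b3_def, rule Lsharp_intro, simp_all)

lemma TY_1_3: "FF 0 b1 \<tau> (z + cvec b3) = FF 0 b2 \<tau> z"
  unfolding FF_T[OF zero_Lsharp b_half(3)] by (rule FF_shiftB[where h="vec4 (0) (1) (1/2) (1/2)"]) (simp_all add: vec_eq4 a1_def a2_def a3_def b1_def b2_def b3_def, rule Lsharp_intro, simp_all)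

lemma TY_2_1: "FF 0 b2 \<tau> (z + cvec b1) = FF 0 b3 \<tau> z"
  unfolding FF_T[OF zero_Lsharp b_half(1)] by (rule FF_shiftB[where h="vec4 (1) (0) (1/2) (1/2)"]) (simp_all add: vec_eq4 a1_def a2_def a3_def b1_def b2_def b3_def, rule Lsharp_intro, simp_all)

lemma TY_2_2: "FF 0 b2 \<tau> (z + cvec b2) = FF 0 0 \<tau> z"
  unfolding FF_T[OF zero_Lsharp b_half(2)] by (rule FF_shiftB[where h="vec4 (1) (0) (0) (0)"]) (simp_all add: vec_eq4 a1_def a2_def a3_def b1_def b2_def b3_def, rule Lsharp_intro, simp_all)

lemma TY_2_3: "FF 0 b2 \<tau> (z + cvec b3) = FF 0 b1 \<tau> z"
  unfolding FF_T[OF zero_Lsharp b_half(3)] by (rule FF_shiftB[where h="vec4 (0) (0) (-1/2) (-1/2)"]) (simp_all add: vec_eq4 a1_def a2_def a3_def b1_def b2_def b3_def, rule Lsharp_intro, simp_all)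

lemma TY_3_1: "FF 0 b3 \<tau> (z + cvec b1) = FF 0 b2 \<tau> z"
  unfolding FF_T[OF zero_Lsharp b_half(1)] by (rule FF_shiftB[where h="vec4 (0) (1) (1/2) (1/2)"]) (simp_all add: vec_eq4 a1_def a2_def a3_def b1_def b2_def b3_def, rule Lsharp_intro, simp_all)

lemma TY_3_2: "FF 0 b3 \<tau> (z + cvec b2) = FF 0 b1 \<tau> z"
  unfolding FF_T[OF zero_Lsharp b_half(2)] by (rule FF_shiftB[where h="vec4 (0) (0) (-1/2) (-1/2)"]) (simp_all add: vec_eq4 a1_def a2_def a3_def b1_def b2_def b3_def, rule Lsharp_intro, simp_all)

lemma TY_3_3: "FF 0 b3 \<tau> (z + cvec b3) = FF 0 0 \<tau> z"
  unfolding FF_T[OF zero_Lsharp b_half(3)] by (rule FF_shiftB[where h="vec4 (0) (1) (0) (0)"]) (simp_all add: vec_eq4 a1_def a2_def a3_def b1_def b2_def b3_def, rule Lsharp_intro, simp_all)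


lemma ft_it: "ft (\<i> * complex_of_real t) 0 x = complex_of_real (exp (- 2 * pi * (t * QR x)))"
proof -
  have "ft (\<i> * complex_of_real t) 0 x = e (\<i> * complex_of_real (t * QR x))"
    unfolding ft_def by (simp add: algebra_simps)
  then show ?thesis unfolding e_real_mult_i by simp
qed

lemma chi_real: assumes "b \<in> halfLat" "v \<in> Lat" shows "chi b v = complex_of_real (Re (chi b v))"
  using chi_pm[OF assms] by auto

lemma gauss_summable0: "t > 0 \<Longrightarrow> (\<lambda>v. exp (- 2*pi*(t * QR (p+v)))) summable_on Lat"
  using gauss_summable[of t p 0] by simp

definition Th :: "real^4 \<Rightarrow> real^4 \<Rightarrow> real \<Rightarrow> real" where
  "Th a b t = Re (theta a b (\<i> * complex_of_real t) 0)"

lemma theta_real: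
  assumes t: "t > 0" and b: "b \<in> halfLat"
  shows "theta a b (\<i> * complex_of_real t) 0 = complex_of_real (Th a b t)"
proof -
  have t': "Im (\<i> * complex_of_real t) > 0" using t by simp
  have s: "(\<lambda>v. chi b v * ft (\<i> * complex_of_real t) 0 (a + v)) summable_on Lat"
    by (rule tm_summable[OF _ t']) simp
  have "Im (theta a b (\<i> * complex_of_real t) 0) = infsum (\<lambda>v. Im (chi b v * ft (\<i> * complex_of_real t) 0 (a + v))) Lat"
    unfolding theta_alt using infsum_Im[OF s] by simp
  also have "\<dots> = infsum (\<lambda>v. 0) Lat"
  proof (rule infsum_cong)
    fix v assume v: "v \<in> Lat"
    show "Im (chi b v * ft (\<i> * complex_of_real t) 0 (a + v)) = 0"
      by (subst chi_real[OF b v]) (simp add: ft_it)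
  qed
  finally show ?thesis unfolding Th_def by (simp add: complex_eq_iff)
qed

lemma FF_real: "t > 0 \<Longrightarrow> b \<in> halfLat \<Longrightarrow> FF a b (\<i> * complex_of_real t) 0 = complex_of_real ((Th a b t)^2)"
  by (simp add: theta_real)

lemma Th_a0: assumes t: "t > 0"
  shows "Th a 0 t = infsum (\<lambda>v. exp (- 2*pi*(t * QR (a+v)))) Lat"
proof -
  have t': "Im (\<i> * complex_of_real t) > 0" using t by simp
  have s: "(\<lambda>v. chi 0 v * ft (\<i> * complex_of_real t) 0 (a + v)) summable_on Lat"
    by (rule tm_summable[OF _ t']) simp
  show ?thesis unfolding Th_def theta_alt infsum_Re[OF s, symmetric]
    by (rule infsum_cong) (simp add: ft_it)
qed

lemma Th_a0_nonneg: "t > 0 \<Longrightarrow> Th a 0 t \<ge> 0"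
  unfolding Th_a0 by (rule infsum_nonneg) simp

lemma Th_00_ge1: assumes t: "t > 0" shows "Th 0 0 t \<ge> 1"
proof -
  have "sum (\<lambda>v. exp (- 2*pi*(t * QR (0+v)))) {0} \<le> infsum (\<lambda>v. exp (- 2*pi*(t * QR (0+v)))) Lat"
    by (rule finite_sum_le_infsum[OF gauss_summable0[OF t]]) auto
  then show ?thesis unfolding Th_a0[OF t] by (simp add: QR_def)
qed

lemma half_int_sq: assumes "y \<in> \<int>" shows "(1/2 + y)^2 \<ge> (1/4::real)"
proof -
  obtain n where n: "y = of_int n" using assms by (elim Ints_cases)
  show ?thesis
  proof (cases "n \<ge> 0")
    case True
    then have "1/2 + y \<ge> 1/2" using n by simp
    then have "(1/2)^2 \<le> (1/2 + y)^2" by (intro power_mono) auto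
    moreover have "(1/2::real)^2 = 1/4" by (simp add: power2_eq_square)
    ultimately show ?thesis by linarith
  next
    case False
    then have "n \<le> -1" by simp
    then have "1/2 \<le> -(1/2 + y)" using n by simp
    then have "(1/2)^2 \<le> (-(1/2 + y))^2" by (rule power_mono) simp
    then have "(1/2)^2 \<le> (1/2 + y)^2" by (simp only: power2_minus)
    moreover have "(1/2::real)^2 = 1/4" by (simp add: power2_eq_square)
    ultimately show ?thesis by linarith
  qed
qed

lemma QR_coset_lower:
  assumes "a \<in> {a1, a2, a3}" "v \<in> Lat"
  shows "QR (a + v) \<ge> 1/20"
proof -
  have vi: "v$0 \<in> \<int>" "v$1 \<in> \<int>" "v$2 \<in> \<int>" "v$3 \<in> \<int>" using assms(2) by (auto simp: Lat_iff)
  have h: "(1/2 + v$0)^2 \<ge> 1/4" "(1/2 + v$1)^2 \<ge> 1/4" "(1/2 + v$2)^2 \<ge> 1/4" "(1/2 + v$3)^2 \<ge> 1/4"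
    using half_int_sq vi by auto
  have p: "(v$0)^2 \<ge> 0" "(v$1)^2 \<ge> 0" "(v$2)^2 \<ge> 0" "(v$3)^2 \<ge> 0" by simp_all
  from assms(1) consider "a = a1" | "a = a2" | "a = a3" by blast
  then have "((a+v)$0^2 + (a+v)$1^2 + (a+v)$2^2 + (a+v)$3^2) \<ge> 1/2"
  proof cases
    case 1
    then have "(a+v)$0^2 + (a+v)$1^2 + (a+v)$2^2 + (a+v)$3^2 = (v$0)^2 + (v$1)^2 + (1/2 + v$2)^2 + (1/2 + v$3)^2"
      by (simp add: a1_def)
    then show ?thesis using h p by linarith
  next
    case 2
    then have "(a+v)$0^2 + (a+v)$1^2 + (a+v)$2^2 + (a+v)$3^2 = (1/2 + v$0)^2 + (v$1)^2 + (v$2)^2 + (1/2 + v$3)^2"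
      by (simp add: a2_def)
    then show ?thesis using h p by linarith
  next
    case 3
    then have "(a+v)$0^2 + (a+v)$1^2 + (a+v)$2^2 + (a+v)$3^2 = (1/2 + v$0)^2 + (v$1)^2 + (1/2 + v$2)^2 + (v$3)^2"
      by (simp add: a3_def)
    then show ?thesis using h p by linarith
  qed
  then show ?thesis using QR_lower[of "a+v"] by simp
qed

lemma Th_decay:
  assumes a: "a \<in> {a1, a2, a3}" and t: "t \<ge> 1"
  shows "Th a 0 t \<le> exp (- pi * (t - 1) / 10) * Th a 0 1"
proof -
  have t0: "t > 0" using t by simp
  have "Th a 0 t = infsum (\<lambda>v. exp (- 2*pi*(t * QR (a+v)))) Lat" by (rule Th_a0[OF t0])
  also have "\<dots> \<le> infsum (\<lambda>v. exp (- pi * (t - 1) / 10) * exp (- 2*pi*(1 * QR (a+v)))) Lat"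
  proof (rule infsum_mono[OF gauss_summable0[OF t0] summable_on_cmult_right[OF gauss_summable0]])
    fix v assume v: "v \<in> Lat"
    have q: "QR (a + v) \<ge> 1/20" by (rule QR_coset_lower[OF a v])
    have "- 2*pi*(t * QR (a+v)) \<le> - pi * (t - 1) / 10 + (- 2*pi*(1 * QR (a+v)))"
    proof -
      have "(t - 1) * (1/20) \<le> (t - 1) * QR (a+v)" by (rule mult_left_mono[OF q]) (use t in simp)
      then have "pi * ((t - 1) * (1/20)) \<le> pi * ((t - 1) * QR (a+v))" by (rule mult_left_mono) simp
      moreover have "- 2*pi*(t * QR (a+v)) = - 2*pi*(1*QR(a+v)) - 2*(pi*((t-1)*QR(a+v)))"
        by (simp add: algebra_simps)
      moreover have "- pi * (t - 1) / 10 = -2*(pi*((t-1)*(1/20)))" by simp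
      ultimately show ?thesis by linarith
    qed
    then show "exp (- 2*pi*(t * QR (a+v))) \<le> exp (- pi * (t - 1) / 10) * exp (- 2*pi*(1 * QR (a+v)))"
      by (simp add: exp_add[symmetric])
  qed simp
  also have "\<dots> = exp (- pi * (t - 1) / 10) * Th a 0 1"
    by (simp add: infsum_cmult_right' Th_a0)
  finally show ?thesis .
qed

lemma exists_good_t:
  "\<exists>t>0. Th a1 0 t \<le> 1/2 \<and> Th a2 0 t \<le> 1/2 \<and> Th a3 0 t \<le> 1/2"
proof -
  define M where "M = Th a1 0 1 + Th a2 0 1 + Th a3 0 1"
  have n1: "Th a1 0 1 \<ge> 0" "Th a2 0 1 \<ge> 0" "Th a3 0 1 \<ge> 0" by (auto intro: Th_a0_nonneg)
  then have M0: "M \<ge> 0" unfolding M_def by simp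
  define t where "t = 1 + 10 * ln (2*M + 2) / pi"
  have ln0: "ln (2*M + 2) \<ge> 0" using M0 by simp
  have t1: "t \<ge> 1" unfolding t_def using ln0 by (simp add: pi_gt_zero)
  have ex: "exp (- pi * (t - 1) / 10) = 1 / (2*M + 2)"
  proof -
    have "- pi * (t - 1) / 10 = - ln (2*M + 2)" unfolding t_def by simp
    then show ?thesis using M0 by (simp add: exp_minus inverse_eq_divide)
  qed
  have bnd: "Th a 0 t \<le> 1/2" if a: "a \<in> {a1, a2, a3}" and aM: "Th a 0 1 \<le> M" for a
  proof -
    have "Th a 0 t \<le> exp (- pi * (t - 1) / 10) * Th a 0 1" by (rule Th_decay[OF a t1])
    also have "\<dots> \<le> (1 / (2*M + 2)) * M" unfolding ex using aM M0 by (intro mult_left_mono) auto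
    also have "\<dots> \<le> 1/2" using M0 by (simp add: field_simps)
    finally show ?thesis .
  qed
  show ?thesis
    using bnd[of a1] bnd[of a2] bnd[of a3] n1 t1 unfolding M_def by (intro exI[of _ t]) auto
qed


lemma chi_b1_split: assumes "u \<in> Lat" shows "chi b1 u = chi b2 u * chi b3 u"
proof -
  have h: "vec4 0 0 (-1/2) (-1/2) \<in> Lsharp" by (rule Lsharp_intro) simp_all
  have "b2 + b3 = b1 + vec4 0 0 (-1/2) (-1/2)" by (simp add: vec_eq4 b1_def b2_def b3_def)
  then have "chi b2 u * chi b3 u = chi b1 u * chi (vec4 0 0 (-1/2) (-1/2)) u"
    unfolding chi_def by (metis BR_add1 e_add of_real_add)
  then show ?thesis using chi_Lsharp[OF h assms] by simp
qed

lemma gg_it: "gg (\<i> * complex_of_real t) 0 0 (v, w) = complex_of_real (exp (- 2 * pi * (t * QR v)) * exp (- 2 * pi * (t * QR w)))"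
  unfolding gg_def by (simp add: ft_it)

lemma E_pos:
  assumes t: "t > 0"
    and Wnn: "\<And>x y. x \<in> {1,-1} \<Longrightarrow> y \<in> {1,-1} \<Longrightarrow> Re (1 + p1*(x*y) + p2*x + p3*y) \<ge> 0"
    and uu: "uu \<in> Lat" and Wpos: "Re (1 + p1 * chi b1 uu + p2 * chi b2 uu + p3 * chi b3 uu) > 0"
  shows "Re (FF 0 0 (\<i> * complex_of_real t) 0 + p1 * FF 0 b1 (\<i> * complex_of_real t) 0
           + p2 * FF 0 b2 (\<i> * complex_of_real t) 0 + p3 * FF 0 b3 (\<i> * complex_of_real t) 0) > 0"
proof -
  define \<tau> where "\<tau> = \<i> * complex_of_real t"
  have t': "Im \<tau> > 0" using t by (simp add: \<tau>_def)
  define f where "f b = (\<lambda>(v,w). chi b (v+w) * gg \<tau> 0 0 (v,w))" for b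
  have sm: "f b summable_on (Lat \<times> Lat)" if "b \<in> halfLat" for b
    unfolding f_def by (rule sq_expand(1)[OF t' that])
  have ex: "FF 0 b \<tau> 0 = infsum (f b) (Lat \<times> Lat)" if "b \<in> halfLat" for b
    unfolding f_def by (rule sq_expand(2)[OF t' that])
  define W where "W u = 1 + p1 * chi b1 u + p2 * chi b2 u + p3 * chi b3 u" for u
  define g where "g p = W (fst p + snd p) * gg \<tau> 0 0 p" for p
  have s0: "f 0 summable_on (Lat \<times> Lat)" by (rule sm) (simp add: halfLat_def)
  have s1: "f b1 summable_on (Lat \<times> Lat)" "f b2 summable_on (Lat \<times> Lat)" "f b3 summable_on (Lat \<times> Lat)"
    using sm b_half by auto
  have gsum: "g = (\<lambda>p. f 0 p + (p1 * f b1 p + (p2 * f b2 p + p3 * f b3 p)))"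
    by (auto simp: fun_eq_iff g_def f_def W_def algebra_simps)
  have gs: "g summable_on (Lat \<times> Lat)"
    unfolding gsum by (intro summable_on_add summable_on_cmult_right s0 s1)
  have "FF 0 0 \<tau> 0 + p1 * FF 0 b1 \<tau> 0 + p2 * FF 0 b2 \<tau> 0 + p3 * FF 0 b3 \<tau> 0 = infsum g (Lat \<times> Lat)"
    unfolding gsum ex[OF b_half(4)] ex[OF b_half(1)] ex[OF b_half(2)] ex[OF b_half(3)]
    by (simp add: infsum_add summable_on_add summable_on_cmult_right s0 s1 infsum_cmult_right' add.assoc)
  moreover have "Re (infsum g (Lat \<times> Lat)) > 0"
  proof -
    have rg: "Re (g p) \<ge> 0" if p: "p \<in> Lat \<times> Lat" for p
    proof -
      obtain v w where vw: "p = (v,w)" "v \<in> Lat" "w \<in> Lat" using p by auto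
      have u: "v + w \<in> Lat" using vw by (simp add: Lat_add)
      have x: "chi b2 (v+w) \<in> {1,-1}" "chi b3 (v+w) \<in> {1,-1}"
        using chi_pm[OF b_half(2) u] chi_pm[OF b_half(3) u] by auto
      have "Re (W (v+w)) \<ge> 0" unfolding W_def chi_b1_split[OF u]
        using Wnn[OF x] by (simp add: algebra_simps)
      then show ?thesis unfolding g_def vw gg_it[of t, unfolded \<tau>_def[symmetric]] by simp
    qed
    have "Re (g (uu, 0)) > 0"
      unfolding g_def gg_it[of t, unfolded \<tau>_def[symmetric]] using Wpos by (simp add: W_def QR_def)
    also have "Re (g (uu, 0)) = sum (\<lambda>p. Re (g p)) {(uu, 0)}" by simp
    also have "\<dots> \<le> infsum (\<lambda>p. Re (g p)) (Lat \<times> Lat)"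
      by (rule finite_sum_le_infsum[OF summable_on_Re[OF gs]]) (use uu rg in auto)
    also have "\<dots> = Re (infsum g (Lat \<times> Lat))" by (rule infsum_Re[OF gs])
    finally show ?thesis .
  qed
  ultimately show ?thesis unfolding \<tau>_def by simp
qed

lemma chi_at: 
  "chi b2 (vec4 1 1 0 0) = -1" "chi b3 (vec4 1 1 0 0) = -1"
  "chi b2 (vec4 1 0 0 0) = 1" "chi b3 (vec4 1 0 0 0) = -1"
  "chi b2 (vec4 0 1 0 0) = -1" "chi b3 (vec4 0 1 0 0) = 1"
  using chi_b2[of 1 1 0 0] chi_b3[of 1 1 0 0] chi_b2[of 1 0 0 0] chi_b3[of 1 0 0 0]
    chi_b2[of 0 1 0 0] chi_b3[of 0 1 0 0] by simp_all

lemma E1_pos: "t > 0 \<Longrightarrow> Re (FF 0 0 (\<i> * complex_of_real t) 0 + 1 * FF 0 b1 (\<i> * complex_of_real t) 0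
           + (-1) * FF 0 b2 (\<i> * complex_of_real t) 0 + (-1) * FF 0 b3 (\<i> * complex_of_real t) 0) > 0"
  by (rule E_pos[where uu="vec4 1 1 0 0"]) (auto simp: chi_at chi_b1_split Lat_iff)

lemma E2_pos: "t > 0 \<Longrightarrow> Re (FF 0 0 (\<i> * complex_of_real t) 0 + (-1) * FF 0 b1 (\<i> * complex_of_real t) 0
           + 1 * FF 0 b2 (\<i> * complex_of_real t) 0 + (-1) * FF 0 b3 (\<i> * complex_of_real t) 0) > 0"
  by (rule E_pos[where uu="vec4 1 0 0 0"]) (auto simp: chi_at chi_b1_split Lat_iff)

lemma E3_pos: "t > 0 \<Longrightarrow> Re (FF 0 0 (\<i> * complex_of_real t) 0 + (-1) * FF 0 b1 (\<i> * complex_of_real t) 0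
           + (-1) * FF 0 b2 (\<i> * complex_of_real t) 0 + 1 * FF 0 b3 (\<i> * complex_of_real t) 0) > 0"
  by (rule E_pos[where uu="vec4 0 1 0 0"]) (auto simp: chi_at chi_b1_split Lat_iff)


lemma alg_main:
  fixes c0 c1 c2 c3 d1 d2 d3 x0 x1 x2 x3 y1 y2 y3 :: complex
  assumes A1: "(c0+c1+c2+c3 + d1 - d2 - d3) * (x0 + y1 - y2 - y3) = 0"
    and A2: "(c0+c1+c2+c3 - d1 + d2 - d3) * (x0 - y1 + y2 - y3) = 0"
    and A3: "(c0+c1+c2+c3 - d1 - d2 + d3) * (x0 - y1 - y2 + y3) = 0"
    and nA1: "x0 + y1 - y2 - y3 \<noteq> 0" and nA2: "x0 - y1 + y2 - y3 \<noteq> 0" and nA3: "x0 - y1 - y2 + y3 \<noteq> 0"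
    and P0: "4*(c1*(x1-x0) + c2*(x2-x0) + c3*(x3-x0)) + (c0+c1+c2+c3+d1+d2+d3)*(x0 + y1 + y2 + y3) = 0"
    and P1: "4*(c1*(x0 - x1) + c2*(x3 - x1) + c3*(x2 - x1)) + (c0+c1+c2+c3+d1+d2+d3)*(4*x1 - 3*x0 + y1+y2+y3) = 0"
    and P2: "4*(c1*(x3 - x2) + c2*(x0 - x2) + c3*(x1 - x2)) + (c0+c1+c2+c3+d1+d2+d3)*(4*x2 - 3*x0 + y1+y2+y3) = 0"
    and P3: "4*(c1*(x2 - x3) + c2*(x1 - x3) + c3*(x0 - x3)) + (c0+c1+c2+c3+d1+d2+d3)*(4*x3 - 3*x0 + y1+y2+y3) = 0"
    and nU: "x1 + x2 + x3 - 2*x0 + y1 + y2 + y3 \<noteq> 0"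
    and nK1: "x0 + x1 - x2 - x3 \<noteq> 0" and nK2: "x0 - x1 + x2 - x3 \<noteq> 0" and nK3: "x0 - x1 - x2 + x3 \<noteq> 0"
  shows "c0 = 0 \<and> c1 = 0 \<and> c2 = 0 \<and> c3 = 0 \<and> d1 = 0 \<and> d2 = 0 \<and> d3 = 0"
proof -
  define e1 where "e1 = c0+c1+c2+c3+d1+d2+d3"
  have "4 * (e1 * (x1 + x2 + x3 - 2*x0 + y1 + y2 + y3)) =
    (4*(c1*(x1-x0) + c2*(x2-x0) + c3*(x3-x0)) + (c0+c1+c2+c3+d1+d2+d3)*(x0 + y1 + y2 + y3))
  + (4*(c1*(x0 - x1) + c2*(x3 - x1) + c3*(x2 - x1)) + (c0+c1+c2+c3+d1+d2+d3)*(4*x1 - 3*x0 + y1+y2+y3))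
  + (4*(c1*(x3 - x2) + c2*(x0 - x2) + c3*(x1 - x2)) + (c0+c1+c2+c3+d1+d2+d3)*(4*x2 - 3*x0 + y1+y2+y3))
  + (4*(c1*(x2 - x3) + c2*(x1 - x3) + c3*(x0 - x3)) + (c0+c1+c2+c3+d1+d2+d3)*(4*x3 - 3*x0 + y1+y2+y3))"
    unfolding e1_def by (simp add: algebra_simps)
  then have "e1 = 0" using P0 P1 P2 P3 nU by simp
  then have e1z: "c0+c1+c2+c3+d1+d2+d3 = 0" unfolding e1_def .
  have q: "4*(c1*(x1-x0) + c2*(x2-x0) + c3*(x3-x0)) = 0"
    and "4*(c1*(x0 - x1) + c2*(x3 - x1) + c3*(x2 - x1)) = 0"
    and "4*(c1*(x3 - x2) + c2*(x0 - x2) + c3*(x1 - x2)) = 0"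
    and "4*(c1*(x2 - x3) + c2*(x1 - x3) + c3*(x0 - x3)) = 0"
    using P0 P1 P2 P3 unfolding e1z mult_zero_left add_0_right .
  then have Q0: "c1*(x1-x0) + c2*(x2-x0) + c3*(x3-x0) = 0"
    and Q1: "c1*(x0 - x1) + c2*(x3 - x1) + c3*(x2 - x1) = 0"
    and Q2: "c1*(x3 - x2) + c2*(x0 - x2) + c3*(x1 - x2) = 0"
    and Q3: "c1*(x2 - x3) + c2*(x1 - x3) + c3*(x0 - x3) = 0"
    using q by (metis mult_eq_0_iff zero_neq_numeral)+
  have "-2 * ((c2 + c3) * (x0 + x1 - x2 - x3)) = (c1*(x1-x0) + c2*(x2-x0) + c3*(x3-x0)) + (c1*(x0 - x1) + c2*(x3 - x1) + c3*(x2 - x1))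
     - (c1*(x3 - x2) + c2*(x0 - x2) + c3*(x1 - x2)) - (c1*(x2 - x3) + c2*(x1 - x3) + c3*(x0 - x3))"
    by (simp add: algebra_simps)
  then have k1: "c2 + c3 = 0" using Q0 Q1 Q2 Q3 nK1 by simp
  have "-2 * ((c1 + c3) * (x0 - x1 + x2 - x3)) = (c1*(x1-x0) + c2*(x2-x0) + c3*(x3-x0)) - (c1*(x0 - x1) + c2*(x3 - x1) + c3*(x2 - x1))
     + (c1*(x3 - x2) + c2*(x0 - x2) + c3*(x1 - x2)) - (c1*(x2 - x3) + c2*(x1 - x3) + c3*(x0 - x3))"
    by (simp add: algebra_simps)
  then have k2: "c1 + c3 = 0" using Q0 Q1 Q2 Q3 nK2 by simp
  have "-2 * ((c1 + c2) * (x0 - x1 - x2 + x3)) = (c1*(x1-x0) + c2*(x2-x0) + c3*(x3-x0)) - (c1*(x0 - x1) + c2*(x3 - x1) + c3*(x2 - x1))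
     - (c1*(x3 - x2) + c2*(x0 - x2) + c3*(x1 - x2)) + (c1*(x2 - x3) + c2*(x1 - x3) + c3*(x0 - x3))"
    by (simp add: algebra_simps)
  then have k3: "c1 + c2 = 0" using Q0 Q1 Q2 Q3 nK3 by simp
  have c123: "c1 = 0" "c2 = 0" "c3 = 0" using k1 k2 k3 by (simp_all add: algebra_simps eq_neg_iff_add_eq_0[symmetric])
  have f1: "c0 + d1 - d2 - d3 = 0" using A1 nA1 c123 by simp
  have f2: "c0 - d1 + d2 - d3 = 0" using A2 nA2 c123 by simp
  have f3: "c0 - d1 - d2 + d3 = 0" using A3 nA3 c123 by simp
  have f0: "c0 + d1 + d2 + d3 = 0" using \<open>e1 = 0\<close> c123 unfolding e1_def by simp
  have "4 * c0 = (c0 + d1 + d2 + d3) + (c0 + d1 - d2 - d3) + (c0 - d1 + d2 - d3) + (c0 - d1 - d2 + d3)" by (simp add: algebra_simps)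
  then have "c0 = 0" using f0 f1 f2 f3 by simp
  moreover have "4 * d1 = (c0 + d1 + d2 + d3) + (c0 + d1 - d2 - d3) - (c0 - d1 + d2 - d3) - (c0 - d1 - d2 + d3)" by (simp add: algebra_simps)
  then have "d1 = 0" using f0 f1 f2 f3 by simp
  moreover have "4 * d2 = (c0 + d1 + d2 + d3) - (c0 + d1 - d2 - d3) + (c0 - d1 + d2 - d3) - (c0 - d1 - d2 + d3)" by (simp add: algebra_simps)
  then have "d2 = 0" using f0 f1 f2 f3 by simp
  moreover have "4 * d3 = (c0 + d1 + d2 + d3) - (c0 + d1 - d2 - d3) - (c0 - d1 + d2 - d3) + (c0 - d1 - d2 + d3)" by (simp add: algebra_simps)
  then have "d3 = 0" using f0 f1 f2 f3 by simp
  ultimately show ?thesis using c123 by simp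
qed


lemma distinctA: "(0::real^4) \<noteq> a1" "(0::real^4) \<noteq> a2" "(0::real^4) \<noteq> a3" "a1 \<noteq> a2" "a1 \<noteq> a3" "a2 \<noteq> a3"
  by (simp_all add: vec_eq4 a1_def a2_def a3_def)

lemma distinctB: "(0::real^4) \<noteq> b1" "(0::real^4) \<noteq> b2" "(0::real^4) \<noteq> b3" "b1 \<noteq> b2" "b1 \<noteq> b3" "b2 \<noteq> b3"
  by (simp_all add: vec_eq4 b1_def b2_def b3_def)

lemma sumA: "(\<Sum>\<alpha>\<in>Aset. f \<alpha>) = f 0 + f a1 + f a2 + f a3"
  unfolding Aset_eq using distinctA by (simp add: add.assoc)

lemma sumB: "(\<Sum>\<beta>\<in>Bset - {0}. f \<beta>) = f b1 + f b2 + f b3"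
proof -
  have "Bset - {0} = {b1, b2, b3}" unfolding Bset_eq using distinctB by auto
  then show ?thesis using distinctB by (simp add: add.assoc)
qed

lemma alg_R:
  fixes c0 c1 c2 c3 d1 d2 d3 x0 x1 x2 x3 y1 y2 y3 :: complex
  assumes E0: "c0*x0 + c1*x1 + c2*x2 + c3*x3 + (d1*y1 + d2*y2 + d3*y3) = 0"
    and E1: "c0*(x0 + y1 - x0) + c1*(x1 + y1 - x0) + c2*(x2 + y1 - x0) + c3*(x3 + y1 - x0) + (d1*x0 + d2*y3 + d3*y2) = 0"
    and E2: "c0*(x0 + y2 - x0) + c1*(x1 + y2 - x0) + c2*(x2 + y2 - x0) + c3*(x3 + y2 - x0) + (d1*y3 + d2*x0 + d3*y1) = 0"
    and E3: "c0*(x0 + y3 - x0) + c1*(x1 + y3 - x0) + c2*(x2 + y3 - x0) + c3*(x3 + y3 - x0) + (d1*y2 + d2*y1 + d3*x0) = 0"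
  shows "4*(c1*(x1-x0) + c2*(x2-x0) + c3*(x3-x0)) + (c0+c1+c2+c3+d1+d2+d3)*(x0 + y1 + y2 + y3) = 0"
    and "(c0+c1+c2+c3 + d1 - d2 - d3) * (x0 + y1 - y2 - y3) = 0"
    and "(c0+c1+c2+c3 - d1 + d2 - d3) * (x0 - y1 + y2 - y3) = 0"
    and "(c0+c1+c2+c3 - d1 - d2 + d3) * (x0 - y1 - y2 + y3) = 0"
proof -
  have "4*(c1*(x1-x0) + c2*(x2-x0) + c3*(x3-x0)) + (c0+c1+c2+c3+d1+d2+d3)*(x0 + y1 + y2 + y3) =
    (c0*x0 + c1*x1 + c2*x2 + c3*x3 + (d1*y1 + d2*y2 + d3*y3))
    + (c0*(x0 + y1 - x0) + c1*(x1 + y1 - x0) + c2*(x2 + y1 - x0) + c3*(x3 + y1 - x0) + (d1*x0 + d2*y3 + d3*y2))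
    + (c0*(x0 + y2 - x0) + c1*(x1 + y2 - x0) + c2*(x2 + y2 - x0) + c3*(x3 + y2 - x0) + (d1*y3 + d2*x0 + d3*y1))
    + (c0*(x0 + y3 - x0) + c1*(x1 + y3 - x0) + c2*(x2 + y3 - x0) + c3*(x3 + y3 - x0) + (d1*y2 + d2*y1 + d3*x0))"
    by (simp add: algebra_simps)
  then show "4*(c1*(x1-x0) + c2*(x2-x0) + c3*(x3-x0)) + (c0+c1+c2+c3+d1+d2+d3)*(x0 + y1 + y2 + y3) = 0"
    by (simp only: E0 E1 E2 E3) simp
  have "(c0+c1+c2+c3 + d1 - d2 - d3) * (x0 + y1 - y2 - y3) =
    (c0*x0 + c1*x1 + c2*x2 + c3*x3 + (d1*y1 + d2*y2 + d3*y3))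
    + (c0*(x0 + y1 - x0) + c1*(x1 + y1 - x0) + c2*(x2 + y1 - x0) + c3*(x3 + y1 - x0) + (d1*x0 + d2*y3 + d3*y2))
    - (c0*(x0 + y2 - x0) + c1*(x1 + y2 - x0) + c2*(x2 + y2 - x0) + c3*(x3 + y2 - x0) + (d1*y3 + d2*x0 + d3*y1))
    - (c0*(x0 + y3 - x0) + c1*(x1 + y3 - x0) + c2*(x2 + y3 - x0) + c3*(x3 + y3 - x0) + (d1*y2 + d2*y1 + d3*x0))"
    by (simp add: algebra_simps)
  then show "(c0+c1+c2+c3 + d1 - d2 - d3) * (x0 + y1 - y2 - y3) = 0" by (simp only: E0 E1 E2 E3) simp
  have "(c0+c1+c2+c3 - d1 + d2 - d3) * (x0 - y1 + y2 - y3) =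
    (c0*x0 + c1*x1 + c2*x2 + c3*x3 + (d1*y1 + d2*y2 + d3*y3))
    - (c0*(x0 + y1 - x0) + c1*(x1 + y1 - x0) + c2*(x2 + y1 - x0) + c3*(x3 + y1 - x0) + (d1*x0 + d2*y3 + d3*y2))
    + (c0*(x0 + y2 - x0) + c1*(x1 + y2 - x0) + c2*(x2 + y2 - x0) + c3*(x3 + y2 - x0) + (d1*y3 + d2*x0 + d3*y1))
    - (c0*(x0 + y3 - x0) + c1*(x1 + y3 - x0) + c2*(x2 + y3 - x0) + c3*(x3 + y3 - x0) + (d1*y2 + d2*y1 + d3*x0))"
    by (simp add: algebra_simps)
  then show "(c0+c1+c2+c3 - d1 + d2 - d3) * (x0 - y1 + y2 - y3) = 0" by (simp only: E0 E1 E2 E3) simp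
  have "(c0+c1+c2+c3 - d1 - d2 + d3) * (x0 - y1 - y2 + y3) =
    (c0*x0 + c1*x1 + c2*x2 + c3*x3 + (d1*y1 + d2*y2 + d3*y3))
    - (c0*(x0 + y1 - x0) + c1*(x1 + y1 - x0) + c2*(x2 + y1 - x0) + c3*(x3 + y1 - x0) + (d1*x0 + d2*y3 + d3*y2))
    - (c0*(x0 + y2 - x0) + c1*(x1 + y2 - x0) + c2*(x2 + y2 - x0) + c3*(x3 + y2 - x0) + (d1*y3 + d2*x0 + d3*y1))
    + (c0*(x0 + y3 - x0) + c1*(x1 + y3 - x0) + c2*(x2 + y3 - x0) + c3*(x3 + y3 - x0) + (d1*y2 + d2*y1 + d3*x0))"
    by (simp add: algebra_simps)
  then show "(c0+c1+c2+c3 - d1 - d2 + d3) * (x0 - y1 - y2 + y3) = 0" by (simp only: E0 E1 E2 E3) simp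
qed

lemma alg_S:
  fixes m c1 c2 c3 e u1 u2 u3 ug x0 y1 y2 y3 :: complex
  assumes m: "m \<noteq> 0"
    and h: "4*(c1*(m*u1 - m*ug) + c2*(m*u2 - m*ug) + c3*(m*u3 - m*ug)) + e*(m*ug + m*(ug + y1 - x0) + m*(ug + y2 - x0) + m*(ug + y3 - x0)) = 0"
  shows "4*(c1*(u1 - ug) + c2*(u2 - ug) + c3*(u3 - ug)) + e*(4*ug - 3*x0 + y1+y2+y3) = 0"
proof -
  have "m * (4*(c1*(u1 - ug) + c2*(u2 - ug) + c3*(u3 - ug)) + e*(4*ug - 3*x0 + y1+y2+y3)) =
    4*(c1*(m*u1 - m*ug) + c2*(m*u2 - m*ug) + c3*(m*u3 - m*ug)) + e*(m*ug + m*(ug + y1 - x0) + m*(ug + y2 - x0) + m*(ug + y3 - x0))"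
    by (simp add: algebra_simps)
  then show ?thesis using h m by simp
qed


lemma Re_pos_nz: "Re (x::complex) > 0 \<Longrightarrow> x \<noteq> 0" by auto

theorem part1:
  fixes a b :: "real^4 \<Rightarrow> complex"
  assumes H: "\<forall>\<tau> z. Im \<tau> > 0 \<longrightarrow>
               (\<Sum>\<alpha>\<in>Aset. a \<alpha> * (theta \<alpha> 0 \<tau> z)^2)
             + (\<Sum>\<beta>\<in>Bset - {0}. b \<beta> * (theta 0 \<beta> \<tau> z)^2) = 0"
  shows "(\<forall>\<alpha>\<in>Aset. a \<alpha> = 0) \<and> (\<forall>\<beta>\<in>Bset - {0}. b \<beta> = 0)"
proof -
  obtain t where t: "t > 0" "Th a1 0 t \<le> 1/2" "Th a2 0 t \<le> 1/2" "Th a3 0 t \<le> 1/2"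
    using exists_good_t by blast
  define \<tau> where "\<tau> = \<i> * complex_of_real t"
  have tp: "Im \<tau> > 0" using t by (simp add: \<tau>_def)
  have Hz: "a 0 * FF 0 0 \<tau> z + a a1 * FF a1 0 \<tau> z + a a2 * FF a2 0 \<tau> z + a a3 * FF a3 0 \<tau> z + (b b1 * FF 0 b1 \<tau> z + b b2 * FF 0 b2 \<tau> z + b b3 * FF 0 b3 \<tau> z) = 0" for z
    using H tp unfolding sumA sumB by simp
  have HT1: "a 0 * (FF 0 0 \<tau> w + FF 0 b1 \<tau> w - FF 0 0 \<tau> w) + a a1 * (FF a1 0 \<tau> w + FF 0 b1 \<tau> w - FF 0 0 \<tau> w) + a a2 * (FF a2 0 \<tau> w + FF 0 b1 \<tau> w - FF 0 0 \<tau> w) + a a3 * (FF a3 0 \<tau> w + FF 0 b1 \<tau> w - FF 0 0 \<tau> w) + (b b1 * FF 0 0 \<tau> w + b b2 * FF 0 b3 \<tau> w + b b3 * FF 0 b2 \<tau> w) = 0" for w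
    using Hz[of "w + cvec b1"] by (simp only: TX[OF tp zero_Lsharp b_half(1)] TX[OF tp a_Lsharp(1) b_half(1)] TX[OF tp a_Lsharp(2) b_half(1)] TX[OF tp a_Lsharp(3) b_half(1)] TY_1_1 TY_2_1 TY_3_1)
  have HT2: "a 0 * (FF 0 0 \<tau> w + FF 0 b2 \<tau> w - FF 0 0 \<tau> w) + a a1 * (FF a1 0 \<tau> w + FF 0 b2 \<tau> w - FF 0 0 \<tau> w) + a a2 * (FF a2 0 \<tau> w + FF 0 b2 \<tau> w - FF 0 0 \<tau> w) + a a3 * (FF a3 0 \<tau> w + FF 0 b2 \<tau> w - FF 0 0 \<tau> w) + (b b1 * FF 0 b3 \<tau> w + b b2 * FF 0 0 \<tau> w + b b3 * FF 0 b1 \<tau> w) = 0" for w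
    using Hz[of "w + cvec b2"] by (simp only: TX[OF tp zero_Lsharp b_half(2)] TX[OF tp a_Lsharp(1) b_half(2)] TX[OF tp a_Lsharp(2) b_half(2)] TX[OF tp a_Lsharp(3) b_half(2)] TY_1_2 TY_2_2 TY_3_2)
  have HT3: "a 0 * (FF 0 0 \<tau> w + FF 0 b3 \<tau> w - FF 0 0 \<tau> w) + a a1 * (FF a1 0 \<tau> w + FF 0 b3 \<tau> w - FF 0 0 \<tau> w) + a a2 * (FF a2 0 \<tau> w + FF 0 b3 \<tau> w - FF 0 0 \<tau> w) + a a3 * (FF a3 0 \<tau> w + FF 0 b3 \<tau> w - FF 0 0 \<tau> w) + (b b1 * FF 0 b2 \<tau> w + b b2 * FF 0 b1 \<tau> w + b b3 * FF 0 0 \<tau> w) = 0" for w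
    using Hz[of "w + cvec b3"] by (simp only: TX[OF tp zero_Lsharp b_half(3)] TX[OF tp a_Lsharp(1) b_half(3)] TX[OF tp a_Lsharp(2) b_half(3)] TX[OF tp a_Lsharp(3) b_half(3)] TY_1_3 TY_2_3 TY_3_3)
  note RR = alg_R[OF Hz HT1 HT2 HT3]
  have mnz1: "(e (- (\<tau> * complex_of_real (QR a1)) - Bf (cvec a1) 0))^2 \<noteq> 0" by simp
  note P1 = alg_S[OF mnz1 RR(1)[of "0 + sS \<tau> a1", unfolded SX_0_1 SX_1_1 SX_2_1 SX_3_1 SY[OF tp a_Lsharp(1) b_half(1)] SY[OF tp a_Lsharp(1) b_half(2)] SY[OF tp a_Lsharp(1) b_half(3)]]]
  have mnz2: "(e (- (\<tau> * complex_of_real (QR a2)) - Bf (cvec a2) 0))^2 \<noteq> 0" by simp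
  note P2 = alg_S[OF mnz2 RR(1)[of "0 + sS \<tau> a2", unfolded SX_0_2 SX_1_2 SX_2_2 SX_3_2 SY[OF tp a_Lsharp(2) b_half(1)] SY[OF tp a_Lsharp(2) b_half(2)] SY[OF tp a_Lsharp(2) b_half(3)]]]
  have mnz3: "(e (- (\<tau> * complex_of_real (QR a3)) - Bf (cvec a3) 0))^2 \<noteq> 0" by simp
  note P3 = alg_S[OF mnz3 RR(1)[of "0 + sS \<tau> a3", unfolded SX_0_3 SX_1_3 SX_2_3 SX_3_3 SY[OF tp a_Lsharp(3) b_half(1)] SY[OF tp a_Lsharp(3) b_half(2)] SY[OF tp a_Lsharp(3) b_half(3)]]]
  note P0 = RR(1)[of 0] and A1 = RR(2)[of 0] and A2 = RR(3)[of 0] and A3 = RR(4)[of 0]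
  have tt: "\<tau> = \<i> * complex_of_real t" by (rule \<tau>_def)
  have nA1: "FF 0 0 \<tau> 0 + FF 0 b1 \<tau> 0 - FF 0 b2 \<tau> 0 - FF 0 b3 \<tau> 0 \<noteq> 0"
  proof
    assume "FF 0 0 \<tau> 0 + FF 0 b1 \<tau> 0 - FF 0 b2 \<tau> 0 - FF 0 b3 \<tau> 0 = 0"
    then show False using E1_pos[OF t(1)] unfolding tt[symmetric] by simp
  qed
  have nA2: "FF 0 0 \<tau> 0 - FF 0 b1 \<tau> 0 + FF 0 b2 \<tau> 0 - FF 0 b3 \<tau> 0 \<noteq> 0"
  proof
    assume "FF 0 0 \<tau> 0 - FF 0 b1 \<tau> 0 + FF 0 b2 \<tau> 0 - FF 0 b3 \<tau> 0 = 0"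
    then show False using E2_pos[OF t(1)] unfolding tt[symmetric] by simp
  qed
  have nA3: "FF 0 0 \<tau> 0 - FF 0 b1 \<tau> 0 - FF 0 b2 \<tau> 0 + FF 0 b3 \<tau> 0 \<noteq> 0"
  proof
    assume "FF 0 0 \<tau> 0 - FF 0 b1 \<tau> 0 - FF 0 b2 \<tau> 0 + FF 0 b3 \<tau> 0 = 0"
    then show False using E3_pos[OF t(1)] unfolding tt[symmetric] by simp
  qed
  have Aa: "a1 \<in> Aset" "a2 \<in> Aset" "a3 \<in> Aset" "(0::real^4) \<in> Aset" unfolding Aset_eq by simp_all
  have Bb: "b1 \<in> Bset" "b2 \<in> Bset" "b3 \<in> Bset" unfolding Bset_eq by simp_all
  have FR: "FF x y \<tau> 0 = complex_of_real ((Th x y t)^2)" if "y \<in> halfLat" for x y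
    unfolding tt by (rule FF_real[OF t(1) that])
  have T00: "(Th 0 0 t)^2 \<ge> 1" using Th_00_ge1[OF t(1)] by (simp add: one_le_power)
  have nU: "FF a1 0 \<tau> 0 + FF a2 0 \<tau> 0 + FF a3 0 \<tau> 0 - 2 * FF 0 0 \<tau> 0 + FF 0 b1 \<tau> 0 + FF 0 b2 \<tau> 0 + FF 0 b3 \<tau> 0 \<noteq> 0" (is "?U \<noteq> 0")
  proof -
    have idr: "FF x y \<tau> 0 = FF x 0 \<tau> 0 + FF 0 y \<tau> 0 - FF 0 0 \<tau> 0" if "x \<in> Aset" "y \<in> Bset" for x y
      using id_reps[OF tp that, of 0] by (simp add: algebra_simps)
    have "4 * (FF a1 0 \<tau> 0 + FF a2 0 \<tau> 0 + FF a3 0 \<tau> 0 - 2 * FF 0 0 \<tau> 0 + FF 0 b1 \<tau> 0 + FF 0 b2 \<tau> 0 + FF 0 b3 \<tau> 0)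
      = FF 0 0 \<tau> 0 + FF a1 0 \<tau> 0 + FF a2 0 \<tau> 0 + FF a3 0 \<tau> 0 + FF 0 b1 \<tau> 0 + FF 0 b2 \<tau> 0 + FF 0 b3 \<tau> 0
        + FF a1 b1 \<tau> 0 + FF a1 b2 \<tau> 0 + FF a1 b3 \<tau> 0 + FF a2 b1 \<tau> 0 + FF a2 b2 \<tau> 0 + FF a2 b3 \<tau> 0
        + FF a3 b1 \<tau> 0 + FF a3 b2 \<tau> 0 + FF a3 b3 \<tau> 0"
      unfolding idr[OF Aa(1) Bb(1)] idr[OF Aa(1) Bb(2)] idr[OF Aa(1) Bb(3)]
        idr[OF Aa(2) Bb(1)] idr[OF Aa(2) Bb(2)] idr[OF Aa(2) Bb(3)]
        idr[OF Aa(3) Bb(1)] idr[OF Aa(3) Bb(2)] idr[OF Aa(3) Bb(3)]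
      by (simp add: algebra_simps)
    also have "Re \<dots> \<ge> 1"
      unfolding FR[OF b_half(4)] FR[OF b_half(1)] FR[OF b_half(2)] FR[OF b_half(3)]
      using T00 by (simp add: add_increasing2 add_increasing)
    finally have "Re (4 * (FF a1 0 \<tau> 0 + FF a2 0 \<tau> 0 + FF a3 0 \<tau> 0 - 2 * FF 0 0 \<tau> 0 + FF 0 b1 \<tau> 0 + FF 0 b2 \<tau> 0 + FF 0 b3 \<tau> 0)) \<ge> 1" .
    note ge = this
    show ?thesis
    proof
      assume h: "?U = 0"
      have "Re (4 * ?U) = 0" unfolding h by simp
      then show False using ge by linarith
    qed
  qed
  have sq: "(Th x 0 t)^2 \<le> 1/4" if "Th x 0 t \<le> 1/2" for x
  proof -
    have "(Th x 0 t)^2 \<le> (1/2)^2" by (rule power_mono[OF that Th_a0_nonneg[OF t(1)]])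
    then show ?thesis by (simp add: power2_eq_square)
  qed
  have s1: "(Th a1 0 t)^2 \<le> 1/4" "(Th a2 0 t)^2 \<le> 1/4" "(Th a3 0 t)^2 \<le> 1/4"
    using sq t(2-4) by auto
  have p: "(Th a1 0 t)^2 \<ge> 0" "(Th a2 0 t)^2 \<ge> 0" "(Th a3 0 t)^2 \<ge> 0" by simp_all
  have nK1: "FF 0 0 \<tau> 0 + FF a1 0 \<tau> 0 - FF a2 0 \<tau> 0 - FF a3 0 \<tau> 0 \<noteq> 0"
  proof -
    have "Re (FF 0 0 \<tau> 0 + FF a1 0 \<tau> 0 - FF a2 0 \<tau> 0 - FF a3 0 \<tau> 0) = (Th 0 0 t)^2 + (Th a1 0 t)^2 - (Th a2 0 t)^2 - (Th a3 0 t)^2"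
      unfolding FR[OF b_half(4)] by simp
    then have rp: "Re (FF 0 0 \<tau> 0 + FF a1 0 \<tau> 0 - FF a2 0 \<tau> 0 - FF a3 0 \<tau> 0) > 0" using T00 s1 p by linarith
    then show ?thesis by (rule Re_pos_nz)
  qed
  have nK2: "FF 0 0 \<tau> 0 - FF a1 0 \<tau> 0 + FF a2 0 \<tau> 0 - FF a3 0 \<tau> 0 \<noteq> 0"
  proof -
    have "Re (FF 0 0 \<tau> 0 - FF a1 0 \<tau> 0 + FF a2 0 \<tau> 0 - FF a3 0 \<tau> 0) = (Th 0 0 t)^2 - (Th a1 0 t)^2 + (Th a2 0 t)^2 - (Th a3 0 t)^2"
      unfolding FR[OF b_half(4)] by simp
    then have rp: "Re (FF 0 0 \<tau> 0 - FF a1 0 \<tau> 0 + FF a2 0 \<tau> 0 - FF a3 0 \<tau> 0) > 0" using T00 s1 p by linarith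
    then show ?thesis by (rule Re_pos_nz)
  qed
  have nK3: "FF 0 0 \<tau> 0 - FF a1 0 \<tau> 0 - FF a2 0 \<tau> 0 + FF a3 0 \<tau> 0 \<noteq> 0"
  proof -
    have "Re (FF 0 0 \<tau> 0 - FF a1 0 \<tau> 0 - FF a2 0 \<tau> 0 + FF a3 0 \<tau> 0) = (Th 0 0 t)^2 - (Th a1 0 t)^2 - (Th a2 0 t)^2 + (Th a3 0 t)^2"
      unfolding FR[OF b_half(4)] by simp
    then have rp: "Re (FF 0 0 \<tau> 0 - FF a1 0 \<tau> 0 - FF a2 0 \<tau> 0 + FF a3 0 \<tau> 0) > 0" using T00 s1 p by linarith
    then show ?thesis by (rule Re_pos_nz)
  qed
  have all0: "a 0 = 0 \<and> a a1 = 0 \<and> a a2 = 0 \<and> a a3 = 0 \<and> b b1 = 0 \<and> b b2 = 0 \<and> b b3 = 0"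
    by (rule alg_main[OF A1 A2 A3 nA1 nA2 nA3 P0 P1 P2 P3 nU nK1 nK2 nK3])
  have "Bset - {0} = {b1, b2, b3}" unfolding Bset_eq using distinctB by auto
  then show ?thesis using all0 unfolding Aset_eq by auto
qed


theorem theorem7p11:
  shows "(\<forall>a b :: real ^ 4 \<Rightarrow> complex.
            (\<forall>\<tau> z. Im \<tau> > 0 \<longrightarrow>
               (\<Sum>\<alpha>\<in>Aset. a \<alpha> * (theta \<alpha> 0 \<tau> z)^2)
             + (\<Sum>\<beta>\<in>Bset - {0}. b \<beta> * (theta 0 \<beta> \<tau> z)^2) = 0)
            \<longrightarrow> (\<forall>\<alpha>\<in>Aset. a \<alpha> = 0) \<and> (\<forall>\<beta>\<in>Bset - {0}. b \<beta> = 0))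
       \<and> (\<forall>\<alpha>\<in>Lsharp. \<forall>\<beta>\<in>halfLat. \<forall>\<tau> z. Im \<tau> > 0 \<longrightarrow>
            (theta \<alpha> \<beta> \<tau> z)^2 + (theta 0 0 \<tau> z)^2
            = (theta \<alpha> 0 \<tau> z)^2 + (theta 0 \<beta> \<tau> z)^2)"
proof (rule conjI)
  show "\<forall>a b :: real ^ 4 \<Rightarrow> complex.
            (\<forall>\<tau> z. Im \<tau> > 0 \<longrightarrow>
               (\<Sum>\<alpha>\<in>Aset. a \<alpha> * (theta \<alpha> 0 \<tau> z)^2)
             + (\<Sum>\<beta>\<in>Bset - {0}. b \<beta> * (theta 0 \<beta> \<tau> z)^2) = 0)
            \<longrightarrow> (\<forall>\<alpha>\<in>Aset. a \<alpha> = 0) \<and> (\<forall>\<beta>\<in>Bset - {0}. b \<beta> = 0)"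
    by (intro allI impI, erule part1)
  show "\<forall>\<alpha>\<in>Lsharp. \<forall>\<beta>\<in>halfLat. \<forall>\<tau> z. Im \<tau> > 0 \<longrightarrow>
            (theta \<alpha> \<beta> \<tau> z)^2 + (theta 0 0 \<tau> z)^2
            = (theta \<alpha> 0 \<tau> z)^2 + (theta 0 \<beta> \<tau> z)^2"
    by (intro ballI allI impI) (rule part2; assumption)
qed

end
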